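(* Let $\mathcal{A}=\{A_1,\dots,A_n\}$ be a finite set of quantum systems with finite-dimensional Hilbert spaces, let $\rho$ be a density operator on $\mathcal{H}_{\mathcal{A}}=\mathcal{H}_{A_1}\otimes\cdots\otimes\mathcal{H}_{A_n}$, and let $q\ge 1$. If $I\subseteq J\subseteq\mathcal{A}$ are nonempty, then $$C_q(I)_\rho\le C_q(J)_\rho .$$
   Context: For a nonempty subset $J\subseteq\mathcal{A}$, $\rho_J$ denotes the reduced state (partial trace of $\rho$ over the systems not in $J$). For $q\in(0,1)\cup(1,\infty)$ the Tsallis entropy is $S_q(J)_\rho=\frac{1}{1-q}\left(\operatorname{Tr}\rho_J^q-1\right)$, and $S_1(J)_\rho:=\lim_{q\to1}S_q(J)_\rho=-\operatorname{Tr}\rho_J\log\rho_J$ is the von Neumann entropy. The $q$-deformed total correlation is $C_q(J)_\rho=\sum_{v\in J}S_q(\{v\})_\rho-S_q(J)_\rho$, the sum running over the single systems $v\in J$; for $q=1$ this is the total correlation $C(J)_\rho=\sum_{v\in J}S(\{v\})_\rho-S(J)_\rho$. *)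

theory Defs
  imports Complex_Main "HOL-Computational_Algebra.Fundamental_Theorem_Algebra"
    "Jordan_Normal_Form.Char_Poly"
begin

text \<open>Systems are elements of a type 'a; the system v carries the Hilbert space
  C^(d v) with computational basis indexed by 0 .. d v - 1. The Hilbert space of a
  finite set S of systems has as orthonormal basis the configurations of S, i.e.
  functions assigning to each v in S a basis index below d v (and 0 outside S).\<close>

type_synonym 'a config = "'a \<Rightarrow> nat"
type_synonym 'a op = "'a config \<Rightarrow> 'a config \<Rightarrow> complex"

definition configs :: "('a \<Rightarrow> nat) \<Rightarrow> 'a set \<Rightarrow> 'a config set" where
  "configs d S = {f. (\<forall>v\<in>S. f v < d v) \<and> (\<forall>v. v \<notin> S \<longrightarrow> f v = 0)}"

definition density_op :: "('a \<Rightarrow> nat) \<Rightarrow> 'a set \<Rightarrow> 'a op \<Rightarrow> bool" where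
  "density_op d S \<rho> \<longleftrightarrow>
     (\<forall>\<psi> :: 'a config \<Rightarrow> complex.
        (\<Sum>x\<in>configs d S. \<Sum>y\<in>configs d S. cnj (\<psi> x) * \<rho> x y * \<psi> y) \<in> \<real> \<and>
        Re (\<Sum>x\<in>configs d S. \<Sum>y\<in>configs d S. cnj (\<psi> x) * \<rho> x y * \<psi> y) \<ge> 0)
     \<and> (\<Sum>x\<in>configs d S. \<rho> x x) = 1"

definition glue :: "'a set \<Rightarrow> 'a config \<Rightarrow> 'a config \<Rightarrow> 'a config" where
  "glue J x z = (\<lambda>v. if v \<in> J then x v else z v)"

definition reduced :: "('a \<Rightarrow> nat) \<Rightarrow> 'a set \<Rightarrow> 'a op \<Rightarrow> 'a set \<Rightarrow> 'a op" where
  "reduced d A \<rho> J x y = (\<Sum>z\<in>configs d (A - J). \<rho> (glue J x z) (glue J y z))"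

text \<open>Matrix of an operator on H_S w.r.t. some fixed enumeration of the basis
  (its characteristic polynomial does not depend on the enumeration).\<close>
definition enum_configs :: "('a \<Rightarrow> nat) \<Rightarrow> 'a set \<Rightarrow> nat \<Rightarrow> 'a config" where
  "enum_configs d S = (SOME e. bij_betw e {..<card (configs d S)} (configs d S))"

definition op_mat :: "('a \<Rightarrow> nat) \<Rightarrow> 'a set \<Rightarrow> 'a op \<Rightarrow> complex mat" where
  "op_mat d S M = (let N = card (configs d S); e = enum_configs d S in
                   mat N N (\<lambda>(i, j). M (e i) (e j)))"

definition eigenvalues :: "('a \<Rightarrow> nat) \<Rightarrow> 'a set \<Rightarrow> 'a op \<Rightarrow> complex multiset" where
  "eigenvalues d S M = proots (char_poly (op_mat d S M))"

text \<open>For a Hermitian operator, Tr f(rho_J) is the sum of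
  f over its (real) eigenvalues; for q > 0 we have 0 powr q = 0, and ln 0 = 0 in
  Isabelle, which realises 0 log 0 = 0.\<close>
definition tsallis :: "real \<Rightarrow> ('a \<Rightarrow> nat) \<Rightarrow> 'a set \<Rightarrow> 'a op \<Rightarrow> 'a set \<Rightarrow> real" where
  "tsallis q d A \<rho> J =
     (let ev = eigenvalues d J (reduced d A \<rho> J) in
      if q = 1 then (\<Sum>e\<in>#ev. - Re e * ln (Re e))
      else ((\<Sum>e\<in>#ev. Re e powr q) - 1) / (1 - q))"

definition total_corr :: "real \<Rightarrow> ('a \<Rightarrow> nat) \<Rightarrow> 'a set \<Rightarrow> 'a op \<Rightarrow> 'a set \<Rightarrow> real" where
  "total_corr q d A \<rho> J = (\<Sum>v\<in>J. tsallis q d A \<rho> {v}) - tsallis q d A \<rho> J"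

end

theory Submission
  imports Defs "Jordan_Normal_Form.Schur_Decomposition" "HOL-Analysis.Convex"
begin

definition adj :: "complex mat \<Rightarrow> complex mat" where
  "adj M = mat (dim_col M) (dim_row M) (\<lambda>(i,j). cnj (M $$ (j,i)))"

lemma adj_carrier[simp]: "dim_row (adj M) = dim_col M" "dim_col (adj M) = dim_row M"
  by (auto simp: adj_def)

lemma adj_carrier_mat: "M \<in> carrier_mat n m \<Longrightarrow> adj M \<in> carrier_mat m n"
  by (auto simp: adj_def)

lemma index_adj[simp]: "i < dim_col M \<Longrightarrow> j < dim_row M \<Longrightarrow> adj M $$ (i,j) = cnj (M $$ (j,i))"
  by (auto simp: adj_def)

lemma adj_adj[simp]: "adj (adj M) = M"
  by (auto simp: adj_def)

lemma adj_mult: assumes "A \<in> carrier_mat nr n" "B \<in> carrier_mat n nc"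
  shows "adj (A * B) = adj B * adj A"
  using assms by (intro eq_matI) (auto simp: scalar_prod_def mult.commute)

lemma cscalar_real: fixes w :: "complex vec" shows "Im (w \<bullet>c w) = 0" "Re (w \<bullet>c w) \<ge> 0"
proof -
  have "w \<bullet>c w \<ge> 0" by (rule conjugate_square_ge_0_vec)
  then show "Im (w \<bullet>c w) = 0" "Re (w \<bullet>c w) \<ge> 0" by (auto simp: less_eq_complex_def)
qed

lemma unitary_ext:
  fixes v :: "complex vec"
  assumes v: "v \<in> carrier_vec n" and v0: "v \<noteq> 0\<^sub>v n"
  shows "\<exists>W c. W \<in> carrier_mat n n \<and> adj W * W = 1\<^sub>m n \<and> col W 0 = c \<cdot>\<^sub>v v"
proof -
  interpret cof_vec_space n "TYPE(complex)" .
  define b where "b = basis_completion v"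
  from basis_completion[OF v v0, folded b_def]
  have span_b: "span (set b) = carrier_vec n" and dist_b: "distinct b" 
    and indep: "\<not> lin_dep (set b)" and b: "set b \<subseteq> carrier_vec n" and hdb: "hd b = v" 
    and len_b: "length b = n" by auto
  have n: "n \<noteq> 0" using v v0 by auto
  from hdb len_b n obtain vs where bv: "b = v # vs" by (cases b, auto)
  define ws where "ws = gram_schmidt n b"
  from gram_schmidt_result[OF b dist_b indep refl, folded ws_def]
  have ws: "set ws \<subseteq> carrier_vec n" "corthogonal ws" "length ws = n" 
    by (auto simp: len_b)
  from gram_schmidt_hd[OF v, of vs, folded bv] have hdws: "hd ws = v" unfolding ws_def .
  define nr where "nr = (\<lambda>w::complex vec. sqrt (Re (w \<bullet>c w)))"
  define ws' where "ws' = map (\<lambda>w. complex_of_real (1 / nr w) \<cdot>\<^sub>v w) ws"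
  define W where "W = mat_of_cols n ws'"
  have lws': "length ws' = n" using ws by (simp add: ws'_def)
  have W: "W \<in> carrier_mat n n" unfolding W_def using lws' by auto
  have wsi: "ws ! i \<in> carrier_vec n" if "i < n" for i using ws that by auto
  have Wij: "W $$ (k, i) = complex_of_real (1 / nr (ws ! i)) * (ws ! i $ k)" if "i < n" "k < n" for i k
    using that wsi[OF that(1)] lws' ws unfolding W_def ws'_def by (simp add: mat_of_cols_index)
  have "adj W * W = 1\<^sub>m n"
  proof (rule eq_matI)
    fix i j assume i: "i < dim_row (1\<^sub>m n)" and j: "j < dim_col (1\<^sub>m n)"
    then have i: "i < n" and j: "j < n" by auto
    have "(adj W * W) $$ (i,j) = (\<Sum>k<n. cnj (W $$ (k,i)) * W $$ (k,j))"
      using W i j by (simp add: scalar_prod_def atLeast0LessThan)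
    also have "\<dots> = cnj (complex_of_real (1 / nr (ws ! i))) * complex_of_real (1 / nr (ws ! j)) *
        (ws ! j \<bullet>c ws ! i)"
      using i j wsi[OF i] wsi[OF j] 
      by (simp add: Wij scalar_prod_def sum_distrib_left atLeast0LessThan algebra_simps)
    also have "\<dots> = (if i = j then 1 else 0)"
    proof (cases "i = j")
      case True
      let ?w = "ws ! i"
      have pos: "Re (?w \<bullet>c ?w) > 0"
      proof -
        have "?w \<noteq> 0\<^sub>v n" using corthogonalD[OF ws(2), of i i] ws(3) i by auto
        then have "?w \<bullet>c ?w > 0" using wsi[OF i] by simp
        then show ?thesis by (simp add: less_complex_def)
      qed
      have eq: "?w \<bullet>c ?w = complex_of_real (nr ?w ^ 2)"
        using cscalar_real[of ?w] pos unfolding nr_def by (simp add: complex_eq_iff)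
      have npos: "nr ?w > 0" unfolding nr_def using pos by simp
      have "cnj (complex_of_real (1 / nr ?w)) * complex_of_real (1 / nr ?w) * complex_of_real (nr ?w ^ 2)
          = complex_of_real ((1 / nr ?w) * (1 / nr ?w) * (nr ?w ^ 2))"
        by (simp only: complex_cnj_complex_of_real of_real_mult)
      also have "(1 / nr ?w) * (1 / nr ?w) * (nr ?w ^ 2) = 1" using npos by (simp add: power2_eq_square)
      finally have "cnj (complex_of_real (1 / nr ?w)) * complex_of_real (1 / nr ?w) * (?w \<bullet>c ?w) = 1"
        unfolding eq by simp
      then show ?thesis using True by simp
    next
      case False
      then have "ws ! j \<bullet>c ws ! i = 0" using corthogonalD[OF ws(2), of j i] ws(3) i j by auto
      then show ?thesis using False by simp
    qed
    finally show "(adj W * W) $$ (i,j) = 1\<^sub>m n $$ (i,j)" using i j by simp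
  qed (use W in auto)
  moreover have "col W 0 = complex_of_real (1 / nr v) \<cdot>\<^sub>v v"
  proof -
    have "ws ! 0 = v" using hdws ws(3) n by (cases ws) auto
    then have w0: "ws' ! 0 = complex_of_real (1 / nr v) \<cdot>\<^sub>v v" using ws(3) n unfolding ws'_def by simp
    have "col W 0 = ws' ! 0" unfolding W_def
      by (rule col_mat_of_cols) (use lws' n w0 v in auto)
    then show ?thesis using w0 by simp
  qed
  ultimately show ?thesis using W by blast
qed

definition Dm :: "complex list \<Rightarrow> nat \<Rightarrow> complex mat" where
  "Dm ls n = mat n n (\<lambda>(i,j). if i = j then ls ! i else 0)"

lemma Dm_carrier[simp]: "Dm ls n \<in> carrier_mat n n" by (simp add: Dm_def)
lemma Dm_dims[simp]: "dim_row (Dm ls n) = n" "dim_col (Dm ls n) = n" by (simp_all add: Dm_def)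

lemma mult_Dm: assumes V: "V \<in> carrier_mat m n"
  shows "V * Dm ls n = mat m n (\<lambda>(i,j). V $$ (i,j) * ls ! j)"
proof (rule eq_matI)
  fix i j assume i: "i < dim_row (mat m n (\<lambda>(i,j). V $$ (i,j) * ls ! j))"
    and j: "j < dim_col (mat m n (\<lambda>(i,j). V $$ (i,j) * ls ! j))"
  then have i: "i < m" and j: "j < n" by auto
  have "(V * Dm ls n) $$ (i,j) = (\<Sum>k\<in>{0..<n}. V $$ (i,k) * (if k = j then ls ! k else 0))"
    using V i j by (simp add: Dm_def scalar_prod_def)
  also have "\<dots> = (\<Sum>k\<in>{0..<n}. if k = j then V $$ (i,j) * ls ! j else 0)"
    by (rule sum.cong) auto
  also have "\<dots> = V $$ (i,j) * ls ! j" using j by simp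
  finally show "(V * Dm ls n) $$ (i,j) = mat m n (\<lambda>(i,j). V $$ (i,j) * ls ! j) $$ (i,j)"
    using i j by simp
qed (use V in auto)

definition hermn :: "complex mat \<Rightarrow> nat \<Rightarrow> bool" where
  "hermn A n \<longleftrightarrow> (\<forall>i<n. \<forall>j<n. A $$ (i,j) = cnj (A $$ (j,i)))"

lemma herm_adj: assumes "A \<in> carrier_mat n n" "hermn A n"
  shows "adj A = A"
proof (rule eq_matI)
  fix i j assume "i < dim_row A" "j < dim_col A"
  then have ij: "i < n" "j < n" using assms(1) by auto
  have "A $$ (i,j) = cnj (A $$ (j,i))" using assms(2) ij unfolding hermn_def by blast
  then show "adj A $$ (i,j) = A $$ (i,j)" using ij assms(1) by (simp only: index_adj carrier_matD complex_cnj_cnj)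
qed (use assms in auto)

lemma spectral:
  fixes A :: "complex mat"
  assumes "A \<in> carrier_mat n n" "hermn A n"
  shows "\<exists>U ls. U \<in> carrier_mat n n \<and> adj U * U = 1\<^sub>m n \<and> length ls = n \<and>
     (\<forall>l\<in>set ls. Im l = 0) \<and> A * U = U * Dm ls n"
  using assms
proof (induction n arbitrary: A)
  case 0
  show ?case
    by (rule exI[of _ "1\<^sub>m 0"], rule exI[of _ "[]"]) (use 0(1) in \<open>auto intro!: eq_matI\<close>)
next
  case (Suc m A)
  let ?n = "Suc m"
  have A: "A \<in> carrier_mat ?n ?n" and hA: "hermn A ?n"
    using Suc.prems(1) Suc.prems(2) by auto
  obtain as where cp: "char_poly A = (\<Prod>a\<leftarrow>as. [:- a, 1:])" and las: "length as = ?n"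
    using char_poly_factorized[OF A] by blast
  then obtain e as' where as: "as = e # as'" by (cases as) auto
  have "poly (char_poly A) e = 0" unfolding cp as by simp
  then have ev: "eigenvalue A e" using eigenvalue_root_char_poly[OF A] by simp
  define v where "v = find_eigenvector A e"
  have "eigenvector A v e" unfolding v_def by (rule find_eigenvector[OF A ev])
  then have v: "v \<in> carrier_vec ?n" and v0: "v \<noteq> 0\<^sub>v ?n" and Av: "A *\<^sub>v v = e \<cdot>\<^sub>v v"
    using A unfolding eigenvector_def by auto
  obtain W c where W: "W \<in> carrier_mat ?n ?n" and WW: "adj W * W = 1\<^sub>m ?n"
    and cW: "col W 0 = c \<cdot>\<^sub>v v"
    using unitary_ext[OF v v0] by blast
  have aW: "adj W \<in> carrier_mat ?n ?n" using W by (rule adj_carrier_mat)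
  have WW': "W * adj W = 1\<^sub>m ?n" by (rule mat_mult_left_right_inverse[OF aW W WW])
  define A' where "A' = adj W * A * W"
  have A': "A' \<in> carrier_mat ?n ?n" unfolding A'_def using A W by auto
  have adjA: "adj A = A" by (rule herm_adj[OF A hA])
  have "adj A' = adj W * adj (adj W * A)" unfolding A'_def
    by (rule adj_mult[of _ ?n ?n]) (use A W aW in auto)
  also have "adj (adj W * A) = adj A * W" 
    using adj_mult[OF aW A] by simp
  finally have "adj A' = adj W * (A * W)" unfolding adjA .
  then have "adj A' = A'" unfolding A'_def using assoc_mult_mat[OF aW A W] by simp
  then have hA': "A' $$ (i,j) = cnj (A' $$ (j,i))" if "i < ?n" "j < ?n" for i j
    using that A' by (metis index_adj carrier_matD)
  have AW0: "(A * W) $$ (k,0) = e * W $$ (k,0)" if k: "k < ?n" for k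
  proof -
    have "(A * W) $$ (k,0) = (A *\<^sub>v col W 0) $ k" using A W k by simp
    also have "A *\<^sub>v col W 0 = c \<cdot>\<^sub>v (e \<cdot>\<^sub>v v)" unfolding cW using mult_mat_vec[OF A v] Av by simp
    also have "\<dots> = e \<cdot>\<^sub>v col W 0" unfolding cW by (auto simp: smult_smult_assoc mult.commute)
    finally show ?thesis using W k by simp
  qed
  have A'0: "A' $$ (i,0) = (if i = 0 then e else 0)" if i: "i < ?n" for i
  proof -
    have "A' $$ (i,0) = (adj W * (A * W)) $$ (i,0)" unfolding A'_def using A W aW by simp
    also have "\<dots> = (\<Sum>k\<in>{0..<?n}. adj W $$ (i,k) * (A * W) $$ (k,0))"
      using A W aW i by (simp add: scalar_prod_def)
    also have "\<dots> = e * (\<Sum>k\<in>{0..<?n}. adj W $$ (i,k) * W $$ (k,0))"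
      by (simp add: AW0 sum_distrib_left algebra_simps)
    also have "(\<Sum>k\<in>{0..<?n}. adj W $$ (i,k) * W $$ (k,0)) = (adj W * W) $$ (i,0)"
      using A W aW i by (simp add: scalar_prod_def)
    finally show ?thesis using i WW by simp
  qed
  have A'r0: "A' $$ (0,j) = (if j = 0 then e else 0)" if j: "j < ?n" for j
  proof (cases "j = 0")
    case True then show ?thesis using A'0[of 0] by simp
  next
    case False
    have "A' $$ (0,j) = cnj (A' $$ (j,0))" by (rule hA') (use j in auto)
    then show ?thesis using A'0[OF j] False by simp
  qed
  have A'00: "A' $$ (0,0) = e" using A'0[of 0] by simp
  have "A' $$ (0,0) = cnj (A' $$ (0,0))" by (rule hA') auto
  then have "e = cnj e" unfolding A'00 .
  then have Ime: "Im e = 0" by (metis cnj.simps(2) neg_equal_zero)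
  define A3 where "A3 = mat m m (\<lambda>(i,j). A' $$ (Suc i, Suc j))"
  have A3: "A3 \<in> carrier_mat m m" unfolding A3_def by simp
  have hA3: "hermn A3 m" unfolding hermn_def
  proof (intro allI impI)
    fix i j assume "i < m" "j < m"
    then show "A3 $$ (i,j) = cnj (A3 $$ (j,i))" unfolding A3_def using hA'[of "Suc i" "Suc j"] by simp
  qed
  obtain U3 ls3 where U3: "U3 \<in> carrier_mat m m" and UU3: "adj U3 * U3 = 1\<^sub>m m"
    and lls3: "length ls3 = m" and rls3: "\<forall>l\<in>set ls3. Im l = 0" and AU3: "A3 * U3 = U3 * Dm ls3 m"
    using Suc.IH[OF A3 hA3] by blast
  define V where "V = mat ?n ?n (\<lambda>(i,j). if i = 0 \<and> j = 0 then 1 else if i = 0 \<or> j = 0 then 0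
     else U3 $$ (i - 1, j - 1))"
  have V: "V \<in> carrier_mat ?n ?n" unfolding V_def by simp
  have VV: "adj V * V = 1\<^sub>m ?n"
  proof (rule eq_matI)
    fix i j assume "i < dim_row (1\<^sub>m ?n)" "j < dim_col (1\<^sub>m ?n)"
    then have i: "i < ?n" and j: "j < ?n" by auto
    have "(adj V * V) $$ (i,j) = (\<Sum>k\<in>{0..<?n}. cnj (V $$ (k,i)) * V $$ (k,j))"
      using V i j by (simp add: scalar_prod_def)
    also have "\<dots> = cnj (V $$ (0,i)) * V $$ (0,j) + (\<Sum>k\<in>{0..<m}. cnj (V $$ (Suc k,i)) * V $$ (Suc k,j))"
      by (subst sum.atLeast0_lessThan_Suc_shift) simp
    also have "\<dots> = 1\<^sub>m ?n $$ (i,j)"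
    proof (cases i)
      case 0
      then show ?thesis using j unfolding V_def by auto
    next
      case (Suc i')
      show ?thesis
      proof (cases j)
        case 0
        then show ?thesis using i Suc unfolding V_def by auto
      next
        case (Suc j')
        have "(\<Sum>k\<in>{0..<m}. cnj (V $$ (Suc k,i)) * V $$ (Suc k,j)) = (adj U3 * U3) $$ (i',j')"
          using U3 i j \<open>i = Suc i'\<close> Suc unfolding V_def by (simp add: scalar_prod_def)
        then show ?thesis using UU3 i j \<open>i = Suc i'\<close> Suc unfolding V_def by simp
      qed
    qed
    finally show "(adj V * V) $$ (i,j) = 1\<^sub>m ?n $$ (i,j)" .
  qed (use V in auto)
  define ls where "ls = e # ls3"
  have A'V: "A' * V = V * Dm ls ?n"
  proof (rule eq_matI)
    fix i j assume "i < dim_row (V * Dm ls ?n)" "j < dim_col (V * Dm ls ?n)"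
    then have i: "i < ?n" and j: "j < ?n" using V by auto
    have "(A' * V) $$ (i,j) = (\<Sum>k\<in>{0..<?n}. A' $$ (i,k) * V $$ (k,j))"
      using V A' i j by (simp add: scalar_prod_def)
    also have "\<dots> = A' $$ (i,0) * V $$ (0,j) + (\<Sum>k\<in>{0..<m}. A' $$ (i,Suc k) * V $$ (Suc k,j))"
      by (subst sum.atLeast0_lessThan_Suc_shift) simp
    also have "\<dots> = V $$ (i,j) * ls ! j"
    proof (cases j)
      case 0
      then show ?thesis using i A'0[OF i] unfolding V_def ls_def by auto
    next
      case (Suc j')
      show ?thesis
      proof (cases i)
        case 0
        then show ?thesis using j Suc A'r0 unfolding V_def by auto
      next
        case (Suc i')
        have "(\<Sum>k\<in>{0..<m}. A' $$ (i,Suc k) * V $$ (Suc k,j)) = (A3 * U3) $$ (i',j')"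
          using U3 A3 i j \<open>j = Suc j'\<close> Suc unfolding V_def A3_def by (simp add: scalar_prod_def)
        also have "\<dots> = U3 $$ (i',j') * ls3 ! j'"
          unfolding AU3 mult_Dm[OF U3] using i j \<open>j = Suc j'\<close> Suc by simp
        finally show ?thesis using i j \<open>j = Suc j'\<close> Suc unfolding V_def ls_def by simp
      qed
    qed
    also have "\<dots> = (V * Dm ls ?n) $$ (i,j)" unfolding mult_Dm[OF V] using i j by simp
    finally show "(A' * V) $$ (i,j) = (V * Dm ls ?n) $$ (i,j)" .
  qed (use V A' in auto)
  define U where "U = W * V"
  have U: "U \<in> carrier_mat ?n ?n" unfolding U_def using W V by simp
  have aV: "adj V \<in> carrier_mat ?n ?n" using V by (rule adj_carrier_mat)
  have "adj U * U = adj V * adj W * (W * V)" unfolding U_def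
    by (simp add: adj_mult[OF W V])
  also have "\<dots> = adj V * (adj W * (W * V))" by (rule assoc_mult_mat[OF aV aW mult_carrier_mat[OF W V]])
  also have "adj W * (W * V) = (adj W * W) * V" by (rule assoc_mult_mat[OF aW W V, symmetric])
  also have "\<dots> = V" unfolding WW using V by simp
  finally have UU: "adj U * U = 1\<^sub>m ?n" using VV by simp
  have AW: "A * W = W * A'"
  proof -
    have AW': "A * W \<in> carrier_mat ?n ?n" using A W by simp
    have "W * A' = W * (adj W * (A * W))" unfolding A'_def using assoc_mult_mat[OF aW A W] by simp
    also have "\<dots> = (W * adj W) * (A * W)" using assoc_mult_mat[OF W aW AW'] by simp
    also have "\<dots> = A * W" unfolding WW' by (rule left_mult_one_mat[OF AW'])
    finally show ?thesis by simp
  qed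
  have A'V': "A' * V \<in> carrier_mat ?n ?n" using A' V by simp
  have "A * U = (A * W) * V" unfolding U_def using assoc_mult_mat[OF A W V] by simp
  also have "\<dots> = W * (A' * V)" unfolding AW using assoc_mult_mat[OF W A' V] by simp
  also have "\<dots> = W * (V * Dm ls ?n)" unfolding A'V ..
  also have "\<dots> = U * Dm ls ?n" unfolding U_def using assoc_mult_mat[OF W V Dm_carrier] by simp
  finally have AU: "A * U = U * Dm ls ?n" .
  have "length ls = ?n" "\<forall>l\<in>set ls. Im l = 0" using lls3 rls3 Ime unfolding ls_def by auto
  then show ?case using U UU AU by blast
qed

lemma proots_lin_prod: "proots (\<Prod>a\<leftarrow>ls. [:- a, 1:]) = mset (ls :: complex list)"
proof (induction ls)
  case (Cons a ls)
  have nz: "(\<Prod>a\<leftarrow>ls. [:- a, 1:]) \<noteq> 0" by (auto simp: prod_list_zero_iff)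
  have e1: "(\<Prod>a\<leftarrow>a # ls. [:- a, 1:]) = [:- a, 1:] * (\<Prod>a\<leftarrow>ls. [:- a, 1:])" by simp
  have e2: "proots ([:- a, 1:] * (\<Prod>a\<leftarrow>ls. [:- a, 1:])) = proots [:- a, 1:] + proots (\<Prod>a\<leftarrow>ls. [:- a, 1:])"
    by (rule proots_mult) (simp, rule nz)
  have e3: "proots [:- a, 1:] = {#a#}" using proots_linear_factor[of "-a"] by simp
  show ?case unfolding e1 e2 e3 Cons.IH by simp
qed simp

lemma spectral_cp:
  fixes A :: "complex mat"
  assumes A: "A \<in> carrier_mat n n" and h: "hermn A n"
  shows "\<exists>U ls. U \<in> carrier_mat n n \<and> adj U * U = 1\<^sub>m n \<and> U * adj U = 1\<^sub>m n \<and> length ls = n \<and>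
     (\<forall>l\<in>set ls. Im l = 0) \<and> A = U * Dm ls n * adj U \<and> proots (char_poly A) = mset ls"
proof -
  obtain U ls where U: "U \<in> carrier_mat n n" and UU: "adj U * U = 1\<^sub>m n" and lls: "length ls = n"
    and rls: "\<forall>l\<in>set ls. Im l = 0" and AU: "A * U = U * Dm ls n"
    using spectral[OF A h] by blast
  have aU: "adj U \<in> carrier_mat n n" using U by (rule adj_carrier_mat)
  have UU': "U * adj U = 1\<^sub>m n" by (rule mat_mult_left_right_inverse[OF aU U UU])
  have UD: "U * Dm ls n \<in> carrier_mat n n" using U by simp
  have "A = A * (U * adj U)" unfolding UU' using A by simp
  also have "\<dots> = (A * U) * adj U" using assoc_mult_mat[OF A U aU] by simp
  also have "\<dots> = U * Dm ls n * adj U" unfolding AU ..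
  finally have Aeq: "A = U * Dm ls n * adj U" .
  have "similar_mat_wit A (Dm ls n) U (adj U)"
    unfolding similar_mat_wit_def Let_def using A U aU UU UU' Aeq by auto
  then have "similar_mat A (Dm ls n)" unfolding similar_mat_def by blast
  then have "char_poly A = char_poly (Dm ls n)" by (rule char_poly_similar)
  also have "\<dots> = (\<Prod>a\<leftarrow>diag_mat (Dm ls n). [:- a, 1:])"
    by (rule char_poly_upper_triangular[of _ n]) (auto simp: upper_triangular_def Dm_def)
  also have "diag_mat (Dm ls n) = ls" unfolding diag_mat_def Dm_def using lls
    by (intro nth_equalityI) auto
  finally have "proots (char_poly A) = mset ls" by (simp add: proots_lin_prod)
  then show ?thesis using U UU UU' lls rls Aeq by blast
qed

lemma mult_entry:
  assumes "A \<in> carrier_mat nr n" "B \<in> carrier_mat n nc" "i < nr" "j < nc"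
  shows "(A * B) $$ (i,j) = (\<Sum>k<n. A $$ (i,k) * B $$ (k,j))"
  using assms by (simp add: scalar_prod_def atLeast0LessThan)

lemma entry_UDU:
  assumes U: "U \<in> carrier_mat n n" and i: "i < n" and j: "j < n"
  shows "(U * Dm ls n * adj U) $$ (i,j) = (\<Sum>k<n. U $$ (i,k) * ls ! k * cnj (U $$ (j,k)))"
proof -
  have UD: "U * Dm ls n \<in> carrier_mat n n" using U by simp
  have "(U * Dm ls n * adj U) $$ (i,j) = (\<Sum>k<n. (U * Dm ls n) $$ (i,k) * adj U $$ (k,j))"
    by (rule mult_entry[OF UD adj_carrier_mat[OF U] i j])
  also have "\<dots> = (\<Sum>k<n. U $$ (i,k) * ls ! k * cnj (U $$ (j,k)))"
  proof (rule sum.cong)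
    fix k assume k: "k \<in> {..<n}"
    have "(U * Dm ls n) $$ (i,k) = U $$ (i,k) * ls ! k" unfolding mult_Dm[OF U] using i k by simp
    moreover have "adj U $$ (k,j) = cnj (U $$ (j,k))" using U j k by simp
    ultimately show "(U * Dm ls n) $$ (i,k) * adj U $$ (k,j) = U $$ (i,k) * ls ! k * cnj (U $$ (j,k))" by simp
  qed simp
  finally show ?thesis .
qed

lemma finite_configs: assumes "finite S" shows "finite (configs d S)"
proof -
  have "configs d S \<subseteq> (\<lambda>g. \<lambda>v. if v \<in> S then g v else 0) ` (PiE S (\<lambda>v. {..<d v}))"
  proof
    fix f assume f: "f \<in> configs d S"
    have "restrict f S \<in> PiE S (\<lambda>v. {..<d v})" using f by (auto simp: configs_def)
    moreover have "f = (\<lambda>v. if v \<in> S then restrict f S v else 0)" using f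
      by (auto simp: configs_def)
    ultimately show "f \<in> (\<lambda>g. \<lambda>v. if v \<in> S then g v else 0) ` (PiE S (\<lambda>v. {..<d v}))" by blast
  qed
  moreover have "finite (PiE S (\<lambda>v. {..<d v}))" using assms by (simp add: finite_PiE)
  ultimately show ?thesis by (meson finite_imageI finite_subset)
qed

lemma enum_configs_bij: assumes "finite S"
  shows "bij_betw (enum_configs d S) {..<card (configs d S)} (configs d S)"
proof -
  obtain h where "bij_betw h {0..<card (configs d S)} (configs d S)"
    using ex_bij_betw_nat_finite[OF finite_configs[OF assms]] by blast
  then have "\<exists>e. bij_betw e {..<card (configs d S)} (configs d S)" by (auto simp: atLeast0LessThan)
  then show ?thesis unfolding enum_configs_def by (rule someI_ex)
qed

definition isspec :: "'c set \<Rightarrow> nat \<Rightarrow> (nat \<Rightarrow> 'c \<Rightarrow> complex) \<Rightarrow> (nat \<Rightarrow> real) \<Rightarrow> ('c \<Rightarrow> 'c \<Rightarrow> complex) \<Rightarrow> bool" where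
  "isspec C N u lam M \<longleftrightarrow>
    (\<forall>k<N. \<forall>l<N. (\<Sum>x\<in>C. cnj (u k x) * u l x) = (if k = l then 1 else 0)) \<and>
    (\<forall>x\<in>C. \<forall>y\<in>C. (\<Sum>k<N. u k x * cnj (u k y)) = (if x = y then 1 else 0)) \<and>
    (\<forall>x\<in>C. \<forall>y\<in>C. M x y = (\<Sum>k<N. complex_of_real (lam k) * u k x * cnj (u k y)))"

definition herm_op :: "'c set \<Rightarrow> ('c \<Rightarrow> 'c \<Rightarrow> complex) \<Rightarrow> bool" where
  "herm_op C M \<longleftrightarrow> (\<forall>x\<in>C. \<forall>y\<in>C. M x y = cnj (M y x))"

lemma spec_ops:
  assumes S: "finite S" and h: "herm_op (configs d S) M"
  shows "\<exists>u lam. isspec (configs d S) (card (configs d S)) u lam M \<and>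
     eigenvalues d S M = mset (map (\<lambda>k. complex_of_real (lam k)) [0..<card (configs d S)])"
proof -
  define C where "C = configs d S"
  define N where "N = card C"
  define e where "e = enum_configs d S"
  have bij: "bij_betw e {..<N} C" unfolding e_def N_def C_def by (rule enum_configs_bij[OF S])
  define A where "A = op_mat d S M"
  have A_def': "A = mat N N (\<lambda>(i,j). M (e i) (e j))"
    unfolding A_def op_mat_def N_def C_def e_def Let_def by simp
  have A: "A \<in> carrier_mat N N" unfolding A_def' by simp
  have ei: "e i \<in> C" if "i < N" for i using bij that by (auto simp: bij_betw_def)
  have hA: "hermn A N" unfolding hermn_def
  proof (intro allI impI)
    fix i j assume i: "i < N" and j: "j < N"
    have "M (e i) (e j) = cnj (M (e j) (e i))" using h ei[OF i] ei[OF j] unfolding herm_op_def C_def by blast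
    then show "A $$ (i, j) = cnj (A $$ (j, i))" unfolding A_def' using i j by simp
  qed
  obtain U ls where U: "U \<in> carrier_mat N N" and UU: "adj U * U = 1\<^sub>m N" and UU': "U * adj U = 1\<^sub>m N"
    and lls: "length ls = N" and rls: "\<forall>l\<in>set ls. Im l = 0" and Aeq: "A = U * Dm ls N * adj U"
    and pr: "proots (char_poly A) = mset ls"
    using spectral_cp[OF A hA] by blast
  define ix where "ix = the_inv_into {..<N} e"
  have ix: "ix x < N" "e (ix x) = x" if "x \<in> C" for x
    using bij that unfolding ix_def
    by (auto simp: bij_betw_def the_inv_into_f_f f_the_inv_into_f the_inv_into_into)
  have ixe: "ix (e i) = i" if "i < N" for i
    using bij that unfolding ix_def by (auto simp: bij_betw_def the_inv_into_f_f)
  define u where "u = (\<lambda>k x. U $$ (ix x, k))"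
  define lam where "lam = (\<lambda>k. Re (ls ! k))"
  have lsk: "ls ! k = complex_of_real (lam k)" if "k < N" for k
    using rls lls that unfolding lam_def by (simp add: complex_eq_iff)
  have sumC: "(\<Sum>x\<in>C. f x) = (\<Sum>i<N. f (e i))" for f :: "_ \<Rightarrow> complex"
    using sum.reindex_bij_betw[OF bij, of f] by simp
  have o1: "(\<Sum>x\<in>C. cnj (u k x) * u l x) = (if k = l then 1 else 0)" if "k < N" "l < N" for k l
  proof -
    have "(\<Sum>x\<in>C. cnj (u k x) * u l x) = (\<Sum>i<N. cnj (U $$ (i, k)) * U $$ (i, l))"
      unfolding sumC u_def by (rule sum.cong) (auto simp: ixe)
    also have "\<dots> = (adj U * U) $$ (k,l)" using U that by (simp add: scalar_prod_def atLeast0LessThan)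
    finally show ?thesis using UU that by simp
  qed
  have o2: "(\<Sum>k<N. u k x * cnj (u k y)) = (if x = y then 1 else 0)" if "x \<in> C" "y \<in> C" for x y
  proof -
    have "(U * adj U) $$ (ix x, ix y) = (\<Sum>k<N. U $$ (ix x, k) * adj U $$ (k, ix y))"
      by (rule mult_entry[OF U adj_carrier_mat[OF U]]) (use ix that in auto)
    also have "\<dots> = (\<Sum>k<N. u k x * cnj (u k y))"
      unfolding u_def by (rule sum.cong) (use U ix that in auto)
    finally have 1: "(\<Sum>k<N. u k x * cnj (u k y)) = (U * adj U) $$ (ix x, ix y)" by simp
    have 2: "(U * adj U) $$ (ix x, ix y) = (if ix x = ix y then 1 else 0)" unfolding UU' using ix that by simp
    have 3: "(ix x = ix y) = (x = y)" using ix(2)[OF that(1)] ix(2)[OF that(2)] by metis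
    have "(\<Sum>k<N. u k x * cnj (u k y)) = (if ix x = ix y then 1 else 0)" using 1 2 by simp
    also have "\<dots> = (if x = y then 1 else 0)" unfolding 3 ..
    finally show ?thesis .
  qed
  have o3: "M x y = (\<Sum>k<N. complex_of_real (lam k) * u k x * cnj (u k y))" if "x \<in> C" "y \<in> C" for x y
  proof -
    have "M x y = A $$ (ix x, ix y)" using ix[OF that(1)] ix[OF that(2)] unfolding A_def' by simp
    also have "\<dots> = (\<Sum>k<N. U $$ (ix x,k) * ls ! k * cnj (U $$ (ix y,k)))"
      unfolding Aeq by (rule entry_UDU[OF U]) (use ix that in auto)
    also have "\<dots> = (\<Sum>k<N. complex_of_real (lam k) * u k x * cnj (u k y))"
      unfolding u_def by (rule sum.cong) (auto simp: lsk)
    finally show ?thesis .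
  qed
  have "isspec C N u lam M" unfolding isspec_def using o1 o2 o3 by auto
  moreover have "eigenvalues d S M = mset (map (\<lambda>k. complex_of_real (lam k)) [0..<N])"
  proof -
    have "map (\<lambda>k. complex_of_real (lam k)) [0..<N] = ls"
      using lls lsk by (intro nth_equalityI) auto
    then show ?thesis unfolding eigenvalues_def A_def[symmetric] pr by simp
  qed
  ultimately show ?thesis unfolding C_def N_def by blast
qed

lemma two_point_convex:
  fixes x y z q :: real
  assumes q: "q \<ge> 1" and z: "0 < z" and zy: "z \<le> y" and yx: "y \<le> x"
  shows "x powr q + y powr q \<le> (x + y - z) powr q + z powr q"
proof (cases "x = z")
  case True
  then have "y = z" using zy yx by simp
  then show ?thesis using True by simp
next
  case False
  define s where "s = x + y - z"
  have sz: "s > z" using False zy yx unfolding s_def by simp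
  define t where "t = (x - z) / (s - z)"
  have t0: "t \<ge> 0" and t1: "t \<le> 1" using sz zy yx unfolding t_def s_def by (auto simp: field_simps)
  have tt: "t * (s - z) = x - z" using sz unfolding t_def by simp
  have "(1 - t) * z + t * s = z + t * (s - z)" by (simp add: algebra_simps)
  then have xe: "x = (1 - t) * z + t * s" using tt by simp
  have ye: "y = (1 - t) * s + t * z" using xe unfolding s_def by (simp add: algebra_simps)
  have cv: "convex_on {0<..} (\<lambda>x::real. x powr q)" by (rule powr_convex[OF q])
  have spos: "s \<in> {0<..}" "z \<in> {0<..}" using sz z by auto
  have 1: "((1 - t) * z + t * s) powr q \<le> (1 - t) * z powr q + t * s powr q"
    using convex_onD[OF cv t0 t1 spos(2) spos(1)] by simp
  have 2: "((1 - t) * s + t * z) powr q \<le> (1 - t) * s powr q + t * z powr q"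
    using convex_onD[OF cv t0 t1 spos(1) spos(2)] by simp
  have "x powr q + y powr q \<le> (1 - t) * z powr q + t * s powr q + ((1 - t) * s powr q + t * z powr q)"
    using 1 2 xe ye by simp
  also have "\<dots> = s powr q + z powr q" by (simp add: algebra_simps)
  finally show ?thesis unfolding s_def .
qed

lemma final_scalar:
  fixes x y z q :: real
  assumes q: "q \<ge> 1" and x: "0 \<le> x" "x \<le> 1" and y: "0 \<le> y" "y \<le> 1" and z: "0 \<le> z" "z \<le> 1"
    and s: "x + y \<le> 1 + z"
  shows "x powr q + y powr q \<le> 1 + z powr q"
proof -
  have main: "a powr q + b powr q \<le> 1 + z powr q"
    if ab: "0 \<le> b" "b \<le> a" "a \<le> 1" "a + b \<le> 1 + z" for a b
  proof (cases "b \<le> z")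
    case True
    have "a powr q \<le> 1 powr q" using ab q by (intro powr_mono2) auto
    moreover have "b powr q \<le> z powr q" using ab q True by (intro powr_mono2) auto
    ultimately show ?thesis by simp
  next
    case False
    show ?thesis
    proof (cases "z = 0")
      case True
      have "a powr q \<le> a powr 1" using ab q False True by (intro powr_mono') auto
      moreover have "b powr q \<le> b powr 1" using ab q by (intro powr_mono') auto
      ultimately show ?thesis using ab True False by simp
    next
      case z0: False
      have "a powr q + b powr q \<le> (a + b - z) powr q + z powr q"
        by (rule two_point_convex) (use q z z0 False ab in auto)
      also have "(a + b - z) powr q \<le> 1 powr q" using ab False q by (intro powr_mono2) auto
      finally show ?thesis by simp
    qed
  qed
  show ?thesis
  proof (cases "y \<le> x")
    case True then show ?thesis using main[of y x] x y s by simp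
  next
    case False then show ?thesis using main[of x y] x y s by simp
  qed
qed

lemma swap3: "(\<Sum>i\<in>I. \<Sum>j\<in>J. \<Sum>k\<in>K. f i j k) = (\<Sum>k\<in>K. \<Sum>i\<in>I. \<Sum>j\<in>J. (f i j k :: real))"
proof -
  have "(\<Sum>i\<in>I. \<Sum>j\<in>J. \<Sum>k\<in>K. f i j k) = (\<Sum>i\<in>I. \<Sum>k\<in>K. \<Sum>j\<in>J. f i j k)"
    by (rule sum.cong[OF refl], rule sum.swap)
  also have "\<dots> = (\<Sum>k\<in>K. \<Sum>i\<in>I. \<Sum>j\<in>J. f i j k)" by (rule sum.swap)
  finally show ?thesis .
qed

lemma pnorm:
  fixes f :: "nat \<Rightarrow> real"
  assumes fin: "finite I" and q: "q > 1" and f0: "\<forall>i\<in>I. f i \<ge> 0" and fs: "(\<Sum>i\<in>I. f i) = 1"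
  shows "\<exists>\<alpha> p. 0 < \<alpha> \<and> \<alpha> \<le> 1 \<and> \<alpha> powr q = (\<Sum>i\<in>I. f i powr q) \<and> (\<Sum>i\<in>I. f i * p i) = \<alpha> \<and>
    (\<forall>i\<in>I. 0 \<le> p i \<and> p i \<le> 1) \<and> (\<Sum>i\<in>I. p i powr (q / (q - 1))) = 1 \<and> (\<Sum>i\<in>I. (f i / \<alpha>) powr q) = 1"
proof -
  define S where "S = (\<Sum>i\<in>I. f i powr q)"
  have fi1: "f i \<le> 1" if "i \<in> I" for i
    using member_le_sum[of i I f] that f0 fin fs by auto
  have fq: "f i powr q \<le> f i" if "i \<in> I" for i
  proof -
    have "f i powr q \<le> f i powr 1" using q f0 fi1 that by (intro powr_mono') auto
    then show ?thesis using f0 that by simp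
  qed
  have S1: "S \<le> 1" unfolding S_def using sum_mono[of I "\<lambda>i. f i powr q" f] fq fs by auto
  obtain i0 where i0: "i0 \<in> I" "f i0 > 0"
  proof -
    have "\<exists>i\<in>I. f i \<noteq> 0" using fs by (metis sum.neutral zero_neq_one)
    then show ?thesis using that f0 by force
  qed
  have fiS: "f i powr q \<le> S" if "i \<in> I" for i
    unfolding S_def by (rule member_le_sum) (use that fin in auto)
  have S0: "S > 0" using fiS[OF i0(1)] i0(2) by (smt (verit) powr_gt_zero)
  define \<alpha> where "\<alpha> = S powr (1 / q)"
  have a0: "\<alpha> > 0" unfolding \<alpha>_def using S0 by simp
  have a1: "\<alpha> \<le> 1" unfolding \<alpha>_def using S1 S0 q by (intro powr_le1) auto
  have aq: "\<alpha> powr q = S" unfolding \<alpha>_def using q S0 by (simp add: powr_powr)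
  have fia: "f i \<le> \<alpha>" if "i \<in> I" for i
  proof -
    have "(f i powr q) powr (1 / q) \<le> S powr (1 / q)" using fiS[OF that] q by (intro powr_mono2) auto
    then show ?thesis unfolding \<alpha>_def using q f0 that by (simp add: powr_powr)
  qed
  define p where "p = (\<lambda>i. (f i / \<alpha>) powr (q - 1))"
  have pb: "0 \<le> p i \<and> p i \<le> 1" if "i \<in> I" for i
    unfolding p_def using q a0 fia[OF that] f0 that by (auto intro!: powr_le1)
  have fdq: "(f i / \<alpha>) powr q = f i powr q / S" for i
    by (simp add: powr_divide aq)
  have sum1: "(\<Sum>i\<in>I. (f i / \<alpha>) powr q) = 1"
    unfolding fdq using S0 by (simp add: S_def[symmetric] flip: sum_divide_distrib)
  have fp: "f i * p i = \<alpha> * (f i / \<alpha>) powr q" if "i \<in> I" for i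
  proof -
    have nn: "f i / \<alpha> \<ge> 0" using f0 that a0 by simp
    have "f i * p i = \<alpha> * ((f i / \<alpha>) powr 1 * (f i / \<alpha>) powr (q - 1))"
      unfolding p_def using nn a0 f0 that by simp
    also have "(f i / \<alpha>) powr 1 * (f i / \<alpha>) powr (q - 1) = (f i / \<alpha>) powr (1 + (q - 1))"
      by (rule powr_add[symmetric])
    also have "(f i / \<alpha>) powr (1 + (q - 1)) = (f i / \<alpha>) powr q" by simp
    finally show ?thesis .
  qed
  have sfp: "(\<Sum>i\<in>I. f i * p i) = \<alpha>"
    using sum1 fp by (simp add: sum_distrib_left[symmetric])
  have pq: "p i powr (q / (q - 1)) = (f i / \<alpha>) powr q" for i
    unfolding p_def using q by (simp add: powr_powr)
  have "(\<Sum>i\<in>I. p i powr (q / (q - 1))) = 1" unfolding pq by (rule sum1)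
  then show ?thesis using a0 a1 aq sfp pb sum1 unfolding S_def by blast
qed

lemma scalar_core:
  fixes a b lam :: "nat \<Rightarrow> real" and D :: "nat \<Rightarrow> nat \<Rightarrow> nat \<Rightarrow> real"
  assumes fin: "finite I" "finite J" "finite K" and q: "q > 1"
    and a0: "\<forall>i\<in>I. a i \<ge> 0" and b0: "\<forall>j\<in>J. b j \<ge> 0" and l0: "\<forall>k\<in>K. lam k \<ge> 0"
    and D0: "\<forall>k\<in>K. \<forall>i\<in>I. \<forall>j\<in>J. D k i j \<ge> 0"
    and ls: "(\<Sum>k\<in>K. lam k) = 1"
    and Dk: "\<forall>k\<in>K. (\<Sum>i\<in>I. \<Sum>j\<in>J. D k i j) = 1"
    and Dij: "\<forall>i\<in>I. \<forall>j\<in>J. (\<Sum>k\<in>K. D k i j) = 1"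
    and am: "\<forall>i\<in>I. a i = (\<Sum>j\<in>J. \<Sum>k\<in>K. lam k * D k i j)"
    and bm: "\<forall>j\<in>J. b j = (\<Sum>i\<in>I. \<Sum>k\<in>K. lam k * D k i j)"
  shows "(\<Sum>i\<in>I. a i powr q) + (\<Sum>j\<in>J. b j powr q) \<le> 1 + (\<Sum>k\<in>K. lam k powr q)"
proof -
  define r where "r i j = (\<Sum>k\<in>K. lam k * D k i j)" for i j
  have r0: "r i j \<ge> 0" if "i \<in> I" "j \<in> J" for i j
    unfolding r_def using l0 D0 that by (auto intro!: sum_nonneg)
  have rsum: "(\<Sum>i\<in>I. \<Sum>j\<in>J. r i j) = 1"
  proof -
    have "(\<Sum>i\<in>I. \<Sum>j\<in>J. r i j) = (\<Sum>k\<in>K. \<Sum>i\<in>I. \<Sum>j\<in>J. lam k * D k i j)"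
      unfolding r_def by (rule swap3)
    also have "\<dots> = (\<Sum>k\<in>K. lam k * (\<Sum>i\<in>I. \<Sum>j\<in>J. D k i j))" by (simp add: sum_distrib_left)
    also have "\<dots> = (\<Sum>k\<in>K. lam k)" by (rule sum.cong) (use Dk in auto)
    finally show ?thesis using ls by simp
  qed
  have ar: "a i = (\<Sum>j\<in>J. r i j)" if "i \<in> I" for i using am that unfolding r_def by auto
  have br: "b j = (\<Sum>i\<in>I. r i j)" if "j \<in> J" for j using bm that unfolding r_def by auto
  have asum: "(\<Sum>i\<in>I. a i) = 1" using rsum ar by simp
  have bsum: "(\<Sum>j\<in>J. b j) = 1"
  proof -
    have "(\<Sum>j\<in>J. b j) = (\<Sum>j\<in>J. \<Sum>i\<in>I. r i j)" by (rule sum.cong) (auto simp: br)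
    also have "\<dots> = (\<Sum>i\<in>I. \<Sum>j\<in>J. r i j)" by (rule sum.swap)
    finally show ?thesis using rsum by simp
  qed
  obtain \<alpha> p where a_0: "0 < \<alpha>" and a_1: "\<alpha> \<le> 1" and aq: "\<alpha> powr q = (\<Sum>i\<in>I. a i powr q)"
    and ap: "(\<Sum>i\<in>I. a i * p i) = \<alpha>" and pb: "\<forall>i\<in>I. 0 \<le> p i \<and> p i \<le> 1"
    and pq: "(\<Sum>i\<in>I. p i powr (q / (q - 1))) = 1"
    using pnorm[OF fin(1) q a0 asum] by blast
  obtain \<beta> s where b_0: "0 < \<beta>" and b_1: "\<beta> \<le> 1" and bq: "\<beta> powr q = (\<Sum>j\<in>J. b j powr q)"
    and bs: "(\<Sum>j\<in>J. b j * s j) = \<beta>" and sb: "\<forall>j\<in>J. 0 \<le> s j \<and> s j \<le> 1"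
    and sq: "(\<Sum>j\<in>J. s j powr (q / (q - 1))) = 1"
    using pnorm[OF fin(2) q b0 bsum] by blast
  obtain \<gamma> where g_0: "0 < \<gamma>" and g_1: "\<gamma> \<le> 1" and gq: "\<gamma> powr q = (\<Sum>k\<in>K. lam k powr q)"
    and lq: "(\<Sum>k\<in>K. (lam k / \<gamma>) powr q) = 1"
    using pnorm[OF fin(3) q l0 ls] by blast
  define q' where "q' = q / (q - 1)"
  have q'1: "q' > 1" unfolding q'_def using q by simp
  have conj: "1 / q + 1 / q' = 1" unfolding q'_def using q by (simp add: field_simps)
  have A1: "\<alpha> = (\<Sum>i\<in>I. \<Sum>j\<in>J. r i j * p i)"
    unfolding ap[symmetric] by (rule sum.cong) (auto simp: ar sum_distrib_right)
  have A2: "\<beta> = (\<Sum>i\<in>I. \<Sum>j\<in>J. r i j * s j)"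
  proof -
    have "\<beta> = (\<Sum>j\<in>J. \<Sum>i\<in>I. r i j * s j)"
      unfolding bs[symmetric] by (rule sum.cong) (auto simp: br sum_distrib_right)
    also have "\<dots> = (\<Sum>i\<in>I. \<Sum>j\<in>J. r i j * s j)" by (rule sum.swap)
    finally show ?thesis .
  qed
  define T where "T = (\<Sum>i\<in>I. \<Sum>j\<in>J. r i j * (p i * s j))"
  have AB: "\<alpha> + \<beta> \<le> 1 + T"
  proof -
    have "\<alpha> + \<beta> = (\<Sum>i\<in>I. \<Sum>j\<in>J. r i j * p i + r i j * s j)"
      unfolding A1 A2 by (simp add: sum.distrib)
    also have "\<dots> \<le> (\<Sum>i\<in>I. \<Sum>j\<in>J. r i j + r i j * (p i * s j))"
    proof (intro sum_mono)
      fix i j assume i: "i \<in> I" and j: "j \<in> J"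
      have h: "0 \<le> r i j * ((1 - p i) * (1 - s j))"
        using r0[OF i j] pb i sb j by (intro mult_nonneg_nonneg) auto
      have e: "r i j * ((1 - p i) * (1 - s j)) = (r i j + r i j * (p i * s j)) - (r i j * p i + r i j * s j)"
        by (simp add: algebra_simps)
      show "r i j * p i + r i j * s j \<le> r i j + r i j * (p i * s j)" using h e by linarith
    qed
    also have "\<dots> = 1 + T" unfolding T_def by (simp add: sum.distrib rsum)
    finally show ?thesis .
  qed
  have C: "T \<le> \<gamma>"
  proof -
    define L where "L k = (lam k / \<gamma>) powr q" for k
    define P where "P i j = (p i * s j) powr q'" for i j
    have T_eq: "T = (\<Sum>i\<in>I. \<Sum>j\<in>J. \<Sum>k\<in>K. D k i j * (lam k * (p i * s j)))"
      unfolding T_def r_def by (simp add: sum_distrib_left sum_distrib_right mult_ac)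
    have pw: "D k i j * (lam k * (p i * s j)) \<le> \<gamma> * (D k i j * (L k / q)) + \<gamma> * (D k i j * (P i j / q'))"
      if k: "k \<in> K" and i: "i \<in> I" and j: "j \<in> J" for i j k
    proof -
      have ps0: "0 \<le> p i * s j" using pb i sb j by simp
      have y: "(lam k / \<gamma>) * (p i * s j) \<le> (lam k / \<gamma>) powr q / q + (p i * s j) powr q' / q'"
        by (rule Youngs_inequality) (use q q'1 conj l0 k g_0 ps0 in auto)
      have "D k i j * (lam k * (p i * s j)) = \<gamma> * D k i j * ((lam k / \<gamma>) * (p i * s j))"
        using g_0 by simp
      also have "\<dots> \<le> \<gamma> * D k i j * ((lam k / \<gamma>) powr q / q + (p i * s j) powr q' / q')"
        using y g_0 D0 k i j by (intro mult_left_mono) auto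
      also have "\<dots> = \<gamma> * (D k i j * (L k / q)) + \<gamma> * (D k i j * (P i j / q'))"
        unfolding L_def P_def by (simp add: algebra_simps)
      finally show ?thesis .
    qed
    have "T \<le> (\<Sum>i\<in>I. \<Sum>j\<in>J. \<Sum>k\<in>K. \<gamma> * (D k i j * (L k / q)) + \<gamma> * (D k i j * (P i j / q')))"
      unfolding T_eq by (intro sum_mono) (use pw in auto)
    also have "\<dots> = (\<Sum>i\<in>I. \<Sum>j\<in>J. \<Sum>k\<in>K. \<gamma> * (D k i j * (L k / q))) +
       (\<Sum>i\<in>I. \<Sum>j\<in>J. \<Sum>k\<in>K. \<gamma> * (D k i j * (P i j / q')))"
      by (simp add: sum.distrib)
    also have "(\<Sum>i\<in>I. \<Sum>j\<in>J. \<Sum>k\<in>K. \<gamma> * (D k i j * (L k / q))) = \<gamma> / q"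
    proof -
      have "(\<Sum>i\<in>I. \<Sum>j\<in>J. \<Sum>k\<in>K. \<gamma> * (D k i j * (L k / q))) =
          (\<Sum>k\<in>K. \<Sum>i\<in>I. \<Sum>j\<in>J. \<gamma> * (D k i j * (L k / q)))" by (rule swap3)
      also have "\<dots> = (\<Sum>k\<in>K. \<gamma> * (L k / q) * (\<Sum>i\<in>I. \<Sum>j\<in>J. D k i j))"
        by (simp add: sum_distrib_left sum_divide_distrib mult_ac)
      also have "\<dots> = (\<Sum>k\<in>K. \<gamma> * (L k / q))" by (rule sum.cong) (use Dk in auto)
      also have "\<dots> = \<gamma> / q * (\<Sum>k\<in>K. L k)" by (simp add: sum_distrib_left)
      finally show ?thesis using lq unfolding L_def by simp
    qed
    also have "(\<Sum>i\<in>I. \<Sum>j\<in>J. \<Sum>k\<in>K. \<gamma> * (D k i j * (P i j / q'))) = \<gamma> / q'"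
    proof -
      have "(\<Sum>i\<in>I. \<Sum>j\<in>J. \<Sum>k\<in>K. \<gamma> * (D k i j * (P i j / q'))) =
          (\<Sum>i\<in>I. \<Sum>j\<in>J. \<gamma> * (P i j / q') * (\<Sum>k\<in>K. D k i j))"
        by (simp add: sum_distrib_left sum_divide_distrib mult_ac)
      also have "\<dots> = (\<Sum>i\<in>I. \<Sum>j\<in>J. \<gamma> / q' * (p i powr q' * s j powr q'))"
        by (intro sum.cong refl) (use Dij in \<open>auto simp: P_def powr_mult\<close>)
      also have "\<dots> = \<gamma> / q' * (\<Sum>i\<in>I. \<Sum>j\<in>J. p i powr q' * s j powr q')"
        by (simp add: sum_distrib_left)
      also have "(\<Sum>i\<in>I. \<Sum>j\<in>J. p i powr q' * s j powr q') = (\<Sum>i\<in>I. p i powr q') * (\<Sum>j\<in>J. s j powr q')"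
        by (rule sum_product[symmetric])
      finally show ?thesis using pq sq unfolding q'_def by simp
    qed
    also have "\<gamma> / q + \<gamma> / q' = \<gamma> * (1 / q + 1 / q')" by (simp add: distrib_left)
    also have "\<dots> = \<gamma>" unfolding conj by simp
    finally show ?thesis .
  qed
  have "\<alpha> + \<beta> \<le> 1 + \<gamma>" using AB C by simp
  then have "\<alpha> powr q + \<beta> powr q \<le> 1 + \<gamma> powr q"
    by (intro final_scalar) (use q a_0 a_1 b_0 b_1 g_0 g_1 in auto)
  then show ?thesis using aq bq gq by simp
qed

definition restr :: "'a set \<Rightarrow> 'a config \<Rightarrow> 'a config" where
  "restr S c = (\<lambda>v. if v \<in> S then c v else 0)"

definition quadform :: "'c set \<Rightarrow> ('c \<Rightarrow> 'c \<Rightarrow> complex) \<Rightarrow> ('c \<Rightarrow> complex) \<Rightarrow> complex" where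
  "quadform C M \<psi> = (\<Sum>x\<in>C. \<Sum>y\<in>C. cnj (\<psi> x) * M x y * \<psi> y)"

definition psd :: "'c set \<Rightarrow> ('c \<Rightarrow> 'c \<Rightarrow> complex) \<Rightarrow> bool" where
  "psd C M \<longleftrightarrow> (\<forall>\<psi>. quadform C M \<psi> \<in> \<real> \<and> Re (quadform C M \<psi>) \<ge> 0)"

lemma density_op_alt: "density_op d S \<rho> \<longleftrightarrow> psd (configs d S) \<rho> \<and> (\<Sum>x\<in>configs d S. \<rho> x x) = 1"
  unfolding density_op_def psd_def quadform_def by blast

lemma glue_in: assumes "x \<in> configs d X" "y \<in> configs d Y"
  shows "glue X x y \<in> configs d (X \<union> Y)"
  using assms by (auto simp: configs_def glue_def)

lemma glue_bij: assumes XY: "X \<inter> Y = {}"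
  shows "bij_betw (\<lambda>(x,y). glue X x y) (configs d X \<times> configs d Y) (configs d (X \<union> Y))"
proof (rule bij_betw_imageI)
  show "inj_on (\<lambda>(x,y). glue X x y) (configs d X \<times> configs d Y)"
  proof (rule inj_onI, clarify)
    fix x y x' y'
    assume x: "x \<in> configs d X" and y: "y \<in> configs d Y" and x': "x' \<in> configs d X" and y': "y' \<in> configs d Y"
      and eq: "glue X x y = glue X x' y'"
    have "x v = x' v \<and> y v = y' v" for v
    proof (cases "v \<in> X")
      case True
      then have "v \<notin> Y" using XY by auto
      then show ?thesis using True eq[THEN fun_cong, of v] y y' by (auto simp: glue_def configs_def)
    next
      case False
      then show ?thesis using eq[THEN fun_cong, of v] x x' by (auto simp: glue_def configs_def)
    qed
    then show "x = x' \<and> y = y'" by auto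
  qed
  show "(\<lambda>(x,y). glue X x y) ` (configs d X \<times> configs d Y) = configs d (X \<union> Y)"
  proof
    show "(\<lambda>(x,y). glue X x y) ` (configs d X \<times> configs d Y) \<subseteq> configs d (X \<union> Y)"
      using glue_in by fastforce
    show "configs d (X \<union> Y) \<subseteq> (\<lambda>(x,y). glue X x y) ` (configs d X \<times> configs d Y)"
    proof
      fix c assume c: "c \<in> configs d (X \<union> Y)"
      have "restr X c \<in> configs d X" "restr Y c \<in> configs d Y" using c by (auto simp: restr_def configs_def)
      moreover have "glue X (restr X c) (restr Y c) = c" using c by (auto simp: glue_def restr_def configs_def)
      ultimately show "c \<in> (\<lambda>(x,y). glue X x y) ` (configs d X \<times> configs d Y)"
        by (metis (no_types, lifting) SigmaI case_prod_conv image_eqI)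
    qed
  qed
qed

lemma sum_glue:
  assumes XY: "X \<inter> Y = {}" and fX: "finite X" and fY: "finite Y"
  shows "(\<Sum>c\<in>configs d (X \<union> Y). f c) = (\<Sum>x\<in>configs d X. \<Sum>y\<in>configs d Y. f (glue X x y))"
proof -
  have "(\<Sum>c\<in>configs d (X \<union> Y). f c) = (\<Sum>p\<in>configs d X \<times> configs d Y. f ((\<lambda>(x,y). glue X x y) p))"
    using sum.reindex_bij_betw[OF glue_bij[OF XY], of f d] by simp
  also have "\<dots> = (\<Sum>(x,y)\<in>configs d X \<times> configs d Y. f (glue X x y))"
    by (rule sum.cong) auto
  also have "\<dots> = (\<Sum>x\<in>configs d X. \<Sum>y\<in>configs d Y. f (glue X x y))"
    by (rule sum.cartesian_product[symmetric])
  finally show ?thesis .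
qed

lemma restr_glue: assumes "x \<in> configs d J" "w \<in> configs d Z" "J \<inter> Z = {}"
  shows "restr J (glue J x w) = x" "restr Z (glue J x w) = w"
  using assms by (auto simp: restr_def glue_def configs_def fun_eq_iff)

lemma sum_single: assumes "finite C" "z \<in> C" "\<forall>w\<in>C. w \<noteq> z \<longrightarrow> h w = 0"
  shows "(\<Sum>w\<in>C. h w) = (h z :: 'b :: comm_monoid_add)"
proof -
  have "(\<Sum>w\<in>C. h w) = h z + (\<Sum>w\<in>C - {z}. h w)" using assms by (simp add: sum.remove)
  also have "(\<Sum>w\<in>C - {z}. h w) = 0" using assms by (intro sum.neutral) auto
  finally show ?thesis by simp
qed

lemma sum_slice:
  assumes fA: "finite A" and JA: "J \<subseteq> A" and z: "z \<in> configs d (A - J)"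
    and g0: "\<forall>c\<in>configs d A. restr (A - J) c \<noteq> z \<longrightarrow> g c = 0"
  shows "(\<Sum>c\<in>configs d A. g c) = (\<Sum>x\<in>configs d J. (g (glue J x z) :: 'b :: comm_monoid_add))"
proof -
  have AJ: "A = J \<union> (A - J)" using JA by auto
  have "(\<Sum>c\<in>configs d A. g c) = (\<Sum>x\<in>configs d J. \<Sum>w\<in>configs d (A - J). g (glue J x w))"
    using sum_glue[where X=J and Y="A - J" and d=d and f=g] fA JA AJ by (metis Diff_disjoint finite_Diff finite_subset)
  also have "\<dots> = (\<Sum>x\<in>configs d J. g (glue J x z))"
  proof (rule sum.cong[OF refl])
    fix x assume x: "x \<in> configs d J"
    show "(\<Sum>w\<in>configs d (A - J). g (glue J x w)) = g (glue J x z)"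
    proof (rule sum_single)
      show "finite (configs d (A - J))" using fA by (simp add: finite_configs)
      show "z \<in> configs d (A - J)" by (rule z)
      show "\<forall>w\<in>configs d (A - J). w \<noteq> z \<longrightarrow> g (glue J x w) = 0"
      proof (intro ballI impI)
        fix w assume w: "w \<in> configs d (A - J)" and wz: "w \<noteq> z"
        have "glue J x w \<in> configs d A" using glue_in[OF x w] AJ by simp
        moreover have "restr (A - J) (glue J x w) = w" using restr_glue[OF x w] by auto
        ultimately show "g (glue J x w) = 0" using g0 wz by auto
      qed
    qed
  qed
  finally show ?thesis .
qed

lemma reduced_quad:
  assumes fA: "finite A" and JA: "J \<subseteq> A"
  shows "quadform (configs d J) (reduced d A \<rho> J) \<psi> =
    (\<Sum>z\<in>configs d (A - J). quadform (configs d A) \<rho> (\<lambda>c. if restr (A - J) c = z then \<psi> (restr J c) else 0))"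
proof -
  let ?CJ = "configs d J" and ?CZ = "configs d (A - J)" and ?CA = "configs d A"
  have "quadform ?CJ (reduced d A \<rho> J) \<psi> =
      (\<Sum>x\<in>?CJ. \<Sum>y\<in>?CJ. \<Sum>z\<in>?CZ. cnj (\<psi> x) * \<rho> (glue J x z) (glue J y z) * \<psi> y)"
    unfolding quadform_def reduced_def by (simp add: sum_distrib_left sum_distrib_right)
  also have "\<dots> = (\<Sum>z\<in>?CZ. \<Sum>x\<in>?CJ. \<Sum>y\<in>?CJ. cnj (\<psi> x) * \<rho> (glue J x z) (glue J y z) * \<psi> y)"
  proof -
    have "(\<Sum>x\<in>?CJ. \<Sum>y\<in>?CJ. \<Sum>z\<in>?CZ. cnj (\<psi> x) * \<rho> (glue J x z) (glue J y z) * \<psi> y) =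
      (\<Sum>x\<in>?CJ. \<Sum>z\<in>?CZ. \<Sum>y\<in>?CJ. cnj (\<psi> x) * \<rho> (glue J x z) (glue J y z) * \<psi> y)"
      by (rule sum.cong[OF refl], rule sum.swap)
    also have "\<dots> = (\<Sum>z\<in>?CZ. \<Sum>x\<in>?CJ. \<Sum>y\<in>?CJ. cnj (\<psi> x) * \<rho> (glue J x z) (glue J y z) * \<psi> y)"
      by (rule sum.swap)
    finally show ?thesis .
  qed
  also have "\<dots> = (\<Sum>z\<in>?CZ. quadform ?CA \<rho> (\<lambda>c. if restr (A - J) c = z then \<psi> (restr J c) else 0))"
  proof (rule sum.cong[OF refl])
    fix z assume z: "z \<in> ?CZ"
    define \<Psi> where "\<Psi> = (\<lambda>c. if restr (A - J) c = z then \<psi> (restr J c) else 0)"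
    have Pg: "\<Psi> (glue J x z) = \<psi> x" if x: "x \<in> ?CJ" for x
      using restr_glue[OF x z] unfolding \<Psi>_def by auto
    have "quadform ?CA \<rho> \<Psi> = (\<Sum>x\<in>?CJ. \<Sum>y\<in>?CA. cnj (\<Psi> (glue J x z)) * \<rho> (glue J x z) y * \<Psi> y)"
      unfolding quadform_def
      by (rule sum_slice[OF fA JA z]) (auto simp: \<Psi>_def)
    also have "\<dots> = (\<Sum>x\<in>?CJ. \<Sum>y\<in>?CJ. cnj (\<Psi> (glue J x z)) * \<rho> (glue J x z) (glue J y z) * \<Psi> (glue J y z))"
      by (rule sum.cong[OF refl], rule sum_slice[OF fA JA z]) (auto simp: \<Psi>_def)
    also have "\<dots> = (\<Sum>x\<in>?CJ. \<Sum>y\<in>?CJ. cnj (\<psi> x) * \<rho> (glue J x z) (glue J y z) * \<psi> y)"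
      by (intro sum.cong refl) (simp add: Pg)
    finally show "(\<Sum>x\<in>?CJ. \<Sum>y\<in>?CJ. cnj (\<psi> x) * \<rho> (glue J x z) (glue J y z) * \<psi> y) =
        quadform ?CA \<rho> (\<lambda>c. if restr (A - J) c = z then \<psi> (restr J c) else 0)"
      unfolding \<Psi>_def by simp
  qed
  finally show ?thesis .
qed

lemma reduced_psd:
  assumes fA: "finite A" and JA: "J \<subseteq> A" and p: "psd (configs d A) \<rho>"
  shows "psd (configs d J) (reduced d A \<rho> J)"
  unfolding psd_def
proof
  fix \<psi>
  let ?f = "\<lambda>z. quadform (configs d A) \<rho> (\<lambda>c. if restr (A - J) c = z then \<psi> (restr J c) else 0)"
  have "\<forall>z. ?f z \<in> \<real> \<and> Re (?f z) \<ge> 0" using p unfolding psd_def by blast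
  then show "quadform (configs d J) (reduced d A \<rho> J) \<psi> \<in> \<real> \<and> Re (quadform (configs d J) (reduced d A \<rho> J) \<psi>) \<ge> 0"
    unfolding reduced_quad[OF fA JA] by (auto intro: sum_nonneg)
qed

lemma reduced_trace:
  assumes fA: "finite A" and JA: "J \<subseteq> A"
  shows "(\<Sum>x\<in>configs d J. reduced d A \<rho> J x x) = (\<Sum>c\<in>configs d A. \<rho> c c)"
proof -
  have AJ: "A = J \<union> (A - J)" using JA by auto
  have fJ: "finite J" using fA JA by (rule finite_subset[rotated])
  have "(\<Sum>c\<in>configs d A. \<rho> c c) = (\<Sum>x\<in>configs d J. \<Sum>w\<in>configs d (A - J). \<rho> (glue J x w) (glue J x w))"
    using sum_glue[where X=J and Y="A - J" and d=d and f="\<lambda>c. \<rho> c c"] fA fJ AJ by (metis Diff_disjoint finite_Diff)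
  then show ?thesis unfolding reduced_def by simp
qed

lemma glue_glue: assumes "X \<subseteq> K"
  shows "glue X x (glue (K - X) y z) = glue K (glue X x y) z"
  using assms by (auto simp: glue_def fun_eq_iff)

lemma reduced_marg:
  assumes fA: "finite A" and XK: "X \<subseteq> K" and KA: "K \<subseteq> A"
  shows "reduced d A \<rho> X x x' = (\<Sum>y\<in>configs d (K - X). reduced d A \<rho> K (glue X x y) (glue X x' y))"
proof -
  have fK: "finite (K - X)" "finite (A - K)" using fA KA finite_subset by auto
  have e: "A - X = (K - X) \<union> (A - K)" using XK KA by auto
  have "reduced d A \<rho> X x x' = (\<Sum>w\<in>configs d ((K - X) \<union> (A - K)). \<rho> (glue X x w) (glue X x' w))"
    unfolding reduced_def e ..
  also have "\<dots> = (\<Sum>y\<in>configs d (K - X). \<Sum>z\<in>configs d (A - K).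
      \<rho> (glue X x (glue (K - X) y z)) (glue X x' (glue (K - X) y z)))"
    by (rule sum_glue) (use fK in auto)
  also have "\<dots> = (\<Sum>y\<in>configs d (K - X). reduced d A \<rho> K (glue X x y) (glue X x' y))"
    unfolding reduced_def glue_glue[OF XK] ..
  finally show ?thesis .
qed

lemma glue_swap: assumes "x \<in> configs d X" "y \<in> configs d Y" "X \<inter> Y = {}"
  shows "glue Y y x = glue X x y"
  using assms by (auto simp: glue_def configs_def fun_eq_iff)

lemma swap3g: "(\<Sum>i\<in>I. \<Sum>j\<in>J. \<Sum>k\<in>K. f i j k) = (\<Sum>k\<in>K. \<Sum>i\<in>I. \<Sum>j\<in>J. (f i j k :: 'b :: comm_monoid_add))"
proof -
  have "(\<Sum>i\<in>I. \<Sum>j\<in>J. \<Sum>k\<in>K. f i j k) = (\<Sum>i\<in>I. \<Sum>k\<in>K. \<Sum>j\<in>J. f i j k)"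
    by (rule sum.cong[OF refl], rule sum.swap)
  also have "\<dots> = (\<Sum>k\<in>K. \<Sum>i\<in>I. \<Sum>j\<in>J. f i j k)" by (rule sum.swap)
  finally show ?thesis .
qed

lemma sum_two: assumes "finite C" "a \<in> C" "b \<in> C" "a \<noteq> b" "\<forall>w\<in>C. w \<noteq> a \<and> w \<noteq> b \<longrightarrow> h w = 0"
  shows "(\<Sum>w\<in>C. h w) = h a + (h b :: 'b :: comm_monoid_add)"
proof -
  have "(\<Sum>w\<in>C. h w) = (\<Sum>w\<in>{a, b}. h w)"
    by (rule sum.mono_neutral_right) (use assms in auto)
  then show ?thesis using assms by simp
qed

lemma quad2:
  assumes fC: "finite C" and a: "a \<in> C" and b: "b \<in> C" and ab: "a \<noteq> b"
  shows "quadform C M (\<lambda>z. if z = a then \<alpha> else if z = b then \<beta> else 0) =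
    cnj \<alpha> * \<alpha> * M a a + cnj \<alpha> * \<beta> * M a b + cnj \<beta> * \<alpha> * M b a + cnj \<beta> * \<beta> * M b b"
proof -
  let ?\<psi> = "\<lambda>z. if z = a then \<alpha> else if z = b then \<beta> else 0"
  have inner: "(\<Sum>y\<in>C. cnj (?\<psi> x) * M x y * ?\<psi> y) = cnj (?\<psi> x) * M x a * \<alpha> + cnj (?\<psi> x) * M x b * \<beta>" for x
    by (subst sum_two[OF fC a b ab]) (use ab in auto)
  have "quadform C M ?\<psi> = (\<Sum>x\<in>C. cnj (?\<psi> x) * M x a * \<alpha> + cnj (?\<psi> x) * M x b * \<beta>)"
    unfolding quadform_def inner ..
  also have "\<dots> = (cnj \<alpha> * M a a * \<alpha> + cnj \<alpha> * M a b * \<beta>) + (cnj \<beta> * M b a * \<alpha> + cnj \<beta> * M b b * \<beta>)"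
    by (subst sum_two[OF fC a b ab]) (use ab in auto)
  finally show ?thesis by (simp add: algebra_simps)
qed

lemma quad1:
  assumes fC: "finite C" and a: "a \<in> C"
  shows "quadform C M (\<lambda>z. if z = a then 1 else 0) = M a a"
proof -
  let ?\<psi> = "\<lambda>z. if z = a then (1::complex) else 0"
  have inner: "(\<Sum>y\<in>C. cnj (?\<psi> x) * M x y * ?\<psi> y) = cnj (?\<psi> x) * M x a" for x
    by (subst sum_single[OF fC a]) auto
  have "quadform C M ?\<psi> = (\<Sum>x\<in>C. cnj (?\<psi> x) * M x a)"
    unfolding quadform_def inner ..
  also have "\<dots> = M a a" by (subst sum_single[OF fC a]) auto
  finally show ?thesis .
qed

lemma herm_of_psd:
  assumes fC: "finite C" and p: "psd C M"
  shows "herm_op C M"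
  unfolding herm_op_def
proof (intro ballI)
  fix a b assume a: "a \<in> C" and b: "b \<in> C"
  have R: "Im (quadform C M \<psi>) = 0" for \<psi> using p unfolding psd_def complex_is_Real_iff by blast
  have Ra: "Im (M a a) = 0" using R[of "\<lambda>z. if z = a then 1 else 0"] quad1[OF fC a] by simp
  show "M a b = cnj (M b a)"
  proof (cases "a = b")
    case True
    then show ?thesis using Ra by (simp add: complex_eq_iff)
  next
    case False
    have Rb: "Im (M b b) = 0" using R[of "\<lambda>z. if z = b then 1 else 0"] quad1[OF fC b] by simp
    have 1: "Im (M a b + M b a) = 0"
      using R[of "\<lambda>z. if z = a then 1 else if z = b then 1 else 0"] quad2[OF fC a b False, of M 1 1] Ra Rb
      by simp
    have 2: "Re (M a b - M b a) = 0"
      using R[of "\<lambda>z. if z = a then 1 else if z = b then \<i> else 0"] quad2[OF fC a b False, of M 1 \<i>] Ra Rb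
      by (simp add: algebra_simps)
    show ?thesis using 1 2 by (simp add: complex_eq_iff)
  qed
qed

lemma isspecD:
  assumes "isspec C N u lam M"
  shows "\<And>k l. k < N \<Longrightarrow> l < N \<Longrightarrow> (\<Sum>x\<in>C. cnj (u k x) * u l x) = (if k = l then 1 else 0)"
    and "\<And>x y. x \<in> C \<Longrightarrow> y \<in> C \<Longrightarrow> (\<Sum>k<N. u k x * cnj (u k y)) = (if x = y then 1 else 0)"
    and "\<And>x y. x \<in> C \<Longrightarrow> y \<in> C \<Longrightarrow> M x y = (\<Sum>k<N. complex_of_real (lam k) * u k x * cnj (u k y))"
  using assms unfolding isspec_def by auto

lemma isspec_ccomp:
  assumes "isspec C N u lam M" "x \<in> C" "y \<in> C"
  shows "(\<Sum>k<N. cnj (u k x) * u k y) = (if x = y then 1 else 0)"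
proof -
  have "cnj (\<Sum>k<N. u k x * cnj (u k y)) = cnj (if x = y then 1 else 0)"
    using isspecD(2)[OF assms(1) assms(2) assms(3)] by simp
  then show ?thesis by (cases "x = y") auto
qed

lemma spec_quad:
  assumes s: "isspec C N u lam M" and fC: "finite C" and k: "k < N"
  shows "quadform C M (u k) = complex_of_real (lam k)"
proof -
  have "quadform C M (u k) = (\<Sum>x\<in>C. \<Sum>y\<in>C. \<Sum>l<N. complex_of_real (lam l) * (cnj (u k x) * u l x) * (cnj (u l y) * u k y))"
    unfolding quadform_def
    by (intro sum.cong refl) (simp add: isspecD(3)[OF s] sum_distrib_left sum_distrib_right mult_ac)
  also have "\<dots> = (\<Sum>l<N. \<Sum>x\<in>C. \<Sum>y\<in>C. complex_of_real (lam l) * (cnj (u k x) * u l x) * (cnj (u l y) * u k y))"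
    by (rule swap3g)
  also have "\<dots> = (\<Sum>l<N. complex_of_real (lam l) * (\<Sum>x\<in>C. cnj (u k x) * u l x) * (\<Sum>y\<in>C. cnj (u l y) * u k y))"
    by (simp add: sum_distrib_left sum_distrib_right mult_ac)
  also have "\<dots> = (\<Sum>l<N. if l = k then complex_of_real (lam k) else 0)"
    by (intro sum.cong refl) (use k in \<open>auto simp: isspecD(1)[OF s]\<close>)
  also have "\<dots> = complex_of_real (lam k)" using k by simp
  finally show ?thesis .
qed

lemma spec_trace:
  assumes s: "isspec C N u lam M" and fC: "finite C"
  shows "(\<Sum>x\<in>C. M x x) = complex_of_real (\<Sum>k<N. lam k)"
proof -
  have "(\<Sum>x\<in>C. M x x) = (\<Sum>x\<in>C. \<Sum>k<N. complex_of_real (lam k) * (cnj (u k x) * u k x))"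
    by (intro sum.cong refl) (simp add: isspecD(3)[OF s] mult_ac)
  also have "\<dots> = (\<Sum>k<N. complex_of_real (lam k) * (\<Sum>x\<in>C. cnj (u k x) * u k x))"
    by (simp add: sum.swap[of _ C] sum_distrib_left)
  also have "\<dots> = (\<Sum>k<N. complex_of_real (lam k))"
    by (intro sum.cong refl) (simp add: isspecD(1)[OF s])
  finally show ?thesis by simp
qed

lemma dens_spec:
  assumes S: "finite S" and p: "psd (configs d S) M" and tr: "(\<Sum>x\<in>configs d S. M x x) = 1"
  shows "\<exists>u lam. isspec (configs d S) (card (configs d S)) u lam M \<and> (\<forall>k<card (configs d S). lam k \<ge> 0) \<and>
    (\<Sum>k<card (configs d S). lam k) = 1 \<and>
    eigenvalues d S M = mset (map (\<lambda>k. complex_of_real (lam k)) [0..<card (configs d S)])"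
proof -
  have fC: "finite (configs d S)" using S by (rule finite_configs)
  obtain u lam where s: "isspec (configs d S) (card (configs d S)) u lam M"
    and ev: "eigenvalues d S M = mset (map (\<lambda>k. complex_of_real (lam k)) [0..<card (configs d S)])"
    using spec_ops[OF S herm_of_psd[OF fC p]] by blast
  have "lam k \<ge> 0" if "k < card (configs d S)" for k
    using p spec_quad[OF s fC that] unfolding psd_def by (metis Re_complex_of_real)
  moreover have "(\<Sum>k<card (configs d S). lam k) = 1"
    using spec_trace[OF s fC] tr by (metis of_real_eq_1_iff)
  ultimately show ?thesis using s ev by blast
qed

lemma parseval:
  assumes fC: "finite C" and comp: "\<forall>x\<in>C. \<forall>x'\<in>C. (\<Sum>m<N. cnj (v m x) * v m x') = (if x = x' then 1 else 0)"
  shows "(\<Sum>m<N. (\<Sum>c\<in>C. cnj (v m c) * f c) * cnj (\<Sum>c\<in>C. cnj (v m c) * f c)) = (\<Sum>c\<in>C. f c * cnj (f c))"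
proof -
  have "(\<Sum>m<N. (\<Sum>c\<in>C. cnj (v m c) * f c) * cnj (\<Sum>c\<in>C. cnj (v m c) * f c)) =
      (\<Sum>m<N. \<Sum>c\<in>C. \<Sum>c'\<in>C. (f c * cnj (f c')) * (cnj (v m c) * v m c'))"
    by (simp add: sum_product mult_ac)
  also have "\<dots> = (\<Sum>c\<in>C. \<Sum>c'\<in>C. \<Sum>m<N. (f c * cnj (f c')) * (cnj (v m c) * v m c'))"
    by (rule swap3g[symmetric])
  also have "\<dots> = (\<Sum>c\<in>C. \<Sum>c'\<in>C. (f c * cnj (f c')) * (if c = c' then 1 else 0))"
    by (intro sum.cong refl) (use comp in \<open>simp add: sum_distrib_left[symmetric]\<close>)
  also have "\<dots> = (\<Sum>c\<in>C. f c * cnj (f c))"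
  proof (rule sum.cong[OF refl])
    fix c assume c: "c \<in> C"
    show "(\<Sum>c'\<in>C. f c * cnj (f c') * (if c = c' then 1 else 0)) = f c * cnj (f c)"
      by (subst sum_single[OF fC c]) auto
  qed
  finally show ?thesis .
qed

lemma summ: "(\<Sum>e\<in>#mset (map g [0..<N]). F e) = (\<Sum>k<N. F (g k))"
  by (induction N) (auto simp: add.commute)

lemma tsallis_spec:
  assumes "eigenvalues d J (reduced d A \<rho> J) = mset (map (\<lambda>k. complex_of_real (lam k)) [0..<N])"
  shows "tsallis q d A \<rho> J = (if q = 1 then (\<Sum>k<N. - lam k * ln (lam k))
     else ((\<Sum>k<N. lam k powr q) - 1) / (1 - q))"
  unfolding tsallis_def Let_def assms summ by simp

lemma quad_marg:
  assumes S: "\<forall>x\<in>CX. \<forall>x'\<in>CX. SX x x' = (\<Sum>y\<in>CY. \<Sum>k<N. complex_of_real (lam k) * E k x y * cnj (E k x' y))"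
  shows "quadform CX SX \<psi> = (\<Sum>k<N. complex_of_real (lam k) *
     (\<Sum>y\<in>CY. (\<Sum>x\<in>CX. cnj (\<psi> x) * E k x y) * cnj (\<Sum>x\<in>CX. cnj (\<psi> x) * E k x y)))"
proof -
  define F where "F x x' y k = complex_of_real (lam k) * (cnj (\<psi> x) * E k x y) * (\<psi> x' * cnj (E k x' y))"
    for x x' y k
  have "quadform CX SX \<psi> = (\<Sum>x\<in>CX. \<Sum>x'\<in>CX. \<Sum>y\<in>CY. \<Sum>k<N. F x x' y k)"
    unfolding quadform_def
  proof (intro sum.cong refl)
    fix x x' assume x: "x \<in> CX" and x': "x' \<in> CX"
    have "SX x x' = (\<Sum>y\<in>CY. \<Sum>k<N. complex_of_real (lam k) * E k x y * cnj (E k x' y))"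
      using S x x' by blast
    then show "cnj (\<psi> x) * SX x x' * \<psi> x' = (\<Sum>y\<in>CY. \<Sum>k<N. F x x' y k)"
      unfolding F_def by (simp add: sum_distrib_left sum_distrib_right mult_ac)
  qed
  also have "\<dots> = (\<Sum>x\<in>CX. \<Sum>x'\<in>CX. \<Sum>k<N. \<Sum>y\<in>CY. F x x' y k)"
    by (intro sum.cong refl) (rule sum.swap)
  also have "\<dots> = (\<Sum>k<N. \<Sum>x\<in>CX. \<Sum>x'\<in>CX. \<Sum>y\<in>CY. F x x' y k)"
    by (rule swap3g)
  also have "\<dots> = (\<Sum>k<N. \<Sum>y\<in>CY. \<Sum>x\<in>CX. \<Sum>x'\<in>CX. F x x' y k)"
    by (intro sum.cong refl) (rule swap3g)
  also have "\<dots> = (\<Sum>k<N. complex_of_real (lam k) *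
     (\<Sum>y\<in>CY. (\<Sum>x\<in>CX. cnj (\<psi> x) * E k x y) * cnj (\<Sum>x\<in>CX. cnj (\<psi> x) * E k x y)))"
    unfolding F_def by (simp add: sum_distrib_left sum_product mult_ac)
  finally show ?thesis .
qed

lemma tsallis_lim:
  fixes lam :: "nat \<Rightarrow> real"
  assumes l0: "\<forall>k<N. lam k \<ge> 0" and ls: "(\<Sum>k<N. lam k) = 1"
  shows "((\<lambda>q. ((\<Sum>k<N. lam k powr q) - 1) / (1 - q)) \<longlongrightarrow> (\<Sum>k<N. - lam k * ln (lam k))) (at 1)"
proof -
  define h where "h q = (\<Sum>k<N. lam k powr q)" for q
  have dk: "((\<lambda>q. lam k powr q) has_real_derivative (lam k * ln (lam k))) (at 1)" if k: "k < N" for k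
  proof (cases "lam k = 0")
    case True
    then show ?thesis by simp
  next
    case False
    then have pos: "lam k > 0" using l0 k by force
    have "((\<lambda>q. lam k powr q) has_real_derivative (lam k powr 1 * (1 * ln (lam k) + 0 * 1 / lam k))) (at 1)"
      by (rule DERIV_powr[where g = "\<lambda>_. lam k" and f = "\<lambda>q. q"]) (auto intro: derivative_eq_intros simp: pos)
    then show ?thesis using pos by simp
  qed
  have "(h has_real_derivative (\<Sum>k<N. lam k * ln (lam k))) (at 1)"
    unfolding h_def by (rule DERIV_sum) (use dk in auto)
  then have lim: "((\<lambda>y. (h y - h 1) / (y - 1)) \<longlongrightarrow> (\<Sum>k<N. lam k * ln (lam k))) (at 1)"
    by (simp add: has_field_derivative_iff)
  have h1: "h 1 = 1" unfolding h_def using l0 ls by simp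
  have "((\<lambda>y. - ((h y - h 1) / (y - 1))) \<longlongrightarrow> - (\<Sum>k<N. lam k * ln (lam k))) (at 1)"
    by (rule tendsto_minus[OF lim])
  moreover have "(\<lambda>y. - ((h y - h 1) / (y - 1))) = (\<lambda>q. ((\<Sum>k<N. lam k powr q) - 1) / (1 - q))"
  proof
    fix q show "- ((h q - h 1) / (q - 1)) = ((\<Sum>k<N. lam k powr q) - 1) / (1 - q)"
      unfolding h1 unfolding h_def by (simp add: minus_divide_right)
  qed
  moreover have "- (\<Sum>k<N. lam k * ln (lam k)) = (\<Sum>k<N. - lam k * ln (lam k))"
    by (simp add: sum_negf)
  ultimately show ?thesis by simp
qed

lemma conj_sq_real: "(z::complex) * cnj z = complex_of_real ((cmod z)\<^sup>2)"
  by (rule complex_norm_square[symmetric])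

lemma subadd_data:
  assumes fA: "finite A" and dens: "density_op d A \<rho>" and XY: "X \<inter> Y = {}" and KA: "X \<union> Y \<subseteq> A"
  shows "\<exists>NX a NY b NK lam.
    eigenvalues d X (reduced d A \<rho> X) = mset (map (\<lambda>k. complex_of_real (a k)) [0..<NX]) \<and>
    eigenvalues d Y (reduced d A \<rho> Y) = mset (map (\<lambda>k. complex_of_real (b k)) [0..<NY]) \<and>
    eigenvalues d (X \<union> Y) (reduced d A \<rho> (X \<union> Y)) = mset (map (\<lambda>k. complex_of_real (lam k)) [0..<NK]) \<and>
    (\<forall>k<NX. a k \<ge> 0) \<and> (\<Sum>k<NX. a k) = 1 \<and>
    (\<forall>k<NY. b k \<ge> 0) \<and> (\<Sum>k<NY. b k) = 1 \<and>
    (\<forall>k<NK. lam k \<ge> 0) \<and> (\<Sum>k<NK. lam k) = 1 \<and>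
    (\<forall>q>1. (\<Sum>k<NX. a k powr q) + (\<Sum>k<NY. b k powr q) \<le> 1 + (\<Sum>k<NK. lam k powr q))"
proof -
  define K where "K = X \<union> Y"
  have fX: "finite X" and fY: "finite Y" and fK: "finite K" using fA KA finite_subset unfolding K_def by auto
  have XK: "X \<subseteq> K" and YK: "Y \<subseteq> K" and KA': "K \<subseteq> A" using KA unfolding K_def by auto
  have KX: "K - X = Y" and KY: "K - Y = X" using XY unfolding K_def by auto
  have pA: "psd (configs d A) \<rho>" and tA: "(\<Sum>c\<in>configs d A. \<rho> c c) = 1"
    using dens unfolding density_op_alt by auto
  let ?CX = "configs d X" and ?CY = "configs d Y" and ?CK = "configs d K"
  have fCX: "finite ?CX" and fCY: "finite ?CY" and fCK: "finite ?CK"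
    using fX fY fK by (auto simp: finite_configs)
  define sX where "sX = reduced d A \<rho> X"
  define sY where "sY = reduced d A \<rho> Y"
  define sK where "sK = reduced d A \<rho> K"
  have dX: "psd ?CX sX" "(\<Sum>x\<in>?CX. sX x x) = 1"
    unfolding sX_def using reduced_psd[OF fA _ pA] reduced_trace[OF fA, of X d \<rho>] tA XK KA' by auto
  have dY: "psd ?CY sY" "(\<Sum>x\<in>?CY. sY x x) = 1"
    unfolding sY_def using reduced_psd[OF fA _ pA] reduced_trace[OF fA, of Y d \<rho>] tA YK KA' by auto
  have dK: "psd ?CK sK" "(\<Sum>x\<in>?CK. sK x x) = 1"
    unfolding sK_def using reduced_psd[OF fA _ pA] reduced_trace[OF fA, of K d \<rho>] tA KA' by auto
  define NX where "NX = card ?CX"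
  define NY where "NY = card ?CY"
  define NK where "NK = card ?CK"
  obtain u a where su: "isspec ?CX NX u a sX" and a0: "\<forall>k<NX. a k \<ge> 0" and as: "(\<Sum>k<NX. a k) = 1"
    and ea: "eigenvalues d X sX = mset (map (\<lambda>k. complex_of_real (a k)) [0..<NX])"
    using dens_spec[OF fX dX] unfolding NX_def by blast
  obtain w b where sw: "isspec ?CY NY w b sY" and b0: "\<forall>k<NY. b k \<ge> 0" and bs: "(\<Sum>k<NY. b k) = 1"
    and eb: "eigenvalues d Y sY = mset (map (\<lambda>k. complex_of_real (b k)) [0..<NY])"
    using dens_spec[OF fY dY] unfolding NY_def by blast
  obtain e lam where se: "isspec ?CK NK e lam sK" and l0: "\<forall>k<NK. lam k \<ge> 0" and ls: "(\<Sum>k<NK. lam k) = 1"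
    and el: "eigenvalues d K sK = mset (map (\<lambda>k. complex_of_real (lam k)) [0..<NK])"
    using dens_spec[OF fK dK] unfolding NK_def by blast
  have gl: "glue X x y \<in> ?CK" if "x \<in> ?CX" "y \<in> ?CY" for x y
    using glue_in[OF that] unfolding K_def .
  have sumK: "(\<Sum>c\<in>?CK. f c) = (\<Sum>x\<in>?CX. \<Sum>y\<in>?CY. f (glue X x y))" for f :: "_ \<Rightarrow> complex"
    unfolding K_def by (rule sum_glue[OF XY fX fY])
  define t where "t k i j = (\<Sum>x\<in>?CX. \<Sum>y\<in>?CY. cnj (u i x) * cnj (w j y) * e k (glue X x y))" for k i j
  define G1 where "G1 k i y = (\<Sum>x\<in>?CX. cnj (u i x) * e k (glue X x y))" for k i y
  define G2 where "G2 k j x = (\<Sum>y\<in>?CY. cnj (w j y) * e k (glue X x y))" for k j x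
  have tG1: "t k i j = (\<Sum>y\<in>?CY. cnj (w j y) * G1 k i y)" for k i j
  proof -
    have "t k i j = (\<Sum>y\<in>?CY. \<Sum>x\<in>?CX. cnj (u i x) * cnj (w j y) * e k (glue X x y))"
      unfolding t_def by (rule sum.swap)
    then show ?thesis unfolding G1_def by (simp add: sum_distrib_left mult_ac)
  qed
  have tG2: "t k i j = (\<Sum>x\<in>?CX. cnj (u i x) * G2 k j x)" for k i j
    unfolding t_def G2_def by (simp add: sum_distrib_left mult_ac)
  have Pu: "(\<Sum>i<NX. (\<Sum>x\<in>?CX. cnj (u i x) * f x) * cnj (\<Sum>x\<in>?CX. cnj (u i x) * f x)) = (\<Sum>x\<in>?CX. f x * cnj (f x))" for f
    by (rule parseval[OF fCX]) (use isspec_ccomp[OF su] in blast)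
  have Pw: "(\<Sum>j<NY. (\<Sum>y\<in>?CY. cnj (w j y) * f y) * cnj (\<Sum>y\<in>?CY. cnj (w j y) * f y)) = (\<Sum>y\<in>?CY. f y * cnj (f y))" for f
    by (rule parseval[OF fCY]) (use isspec_ccomp[OF sw] in blast)
  have Pe: "(\<Sum>k<NK. (\<Sum>c\<in>?CK. cnj (e k c) * f c) * cnj (\<Sum>c\<in>?CK. cnj (e k c) * f c)) = (\<Sum>c\<in>?CK. f c * cnj (f c))" for f
    by (rule parseval[OF fCK]) (use isspec_ccomp[OF se] in blast)
  have D1: "(\<Sum>i<NX. \<Sum>j<NY. t k i j * cnj (t k i j)) = 1" if k: "k < NK" for k
  proof -
    have "(\<Sum>i<NX. \<Sum>j<NY. t k i j * cnj (t k i j)) = (\<Sum>i<NX. \<Sum>y\<in>?CY. G1 k i y * cnj (G1 k i y))"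
      unfolding tG1 by (intro sum.cong refl) (rule Pw)
    also have "\<dots> = (\<Sum>y\<in>?CY. \<Sum>i<NX. G1 k i y * cnj (G1 k i y))" by (rule sum.swap)
    also have "\<dots> = (\<Sum>y\<in>?CY. \<Sum>x\<in>?CX. e k (glue X x y) * cnj (e k (glue X x y)))"
      unfolding G1_def by (intro sum.cong refl) (rule Pu)
    also have "\<dots> = (\<Sum>x\<in>?CX. \<Sum>y\<in>?CY. e k (glue X x y) * cnj (e k (glue X x y)))" by (rule sum.swap)
    also have "\<dots> = (\<Sum>c\<in>?CK. e k c * cnj (e k c))" by (rule sumK[symmetric])
    also have "\<dots> = (\<Sum>c\<in>?CK. cnj (e k c) * e k c)" by (simp add: mult.commute)
    also have "\<dots> = 1" using isspecD(1)[OF se k k] by simp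
    finally show ?thesis .
  qed
  have D2: "(\<Sum>k<NK. t k i j * cnj (t k i j)) = 1" if i: "i < NX" and j: "j < NY" for i j
  proof -
    define Phi where "Phi c = u i (restr X c) * w j (restr Y c)" for c
    have Pg: "Phi (glue X x y) = u i x * w j y" if "x \<in> ?CX" "y \<in> ?CY" for x y
      unfolding Phi_def using restr_glue[OF that XY] by simp
    have ct: "cnj (t k i j) = (\<Sum>c\<in>?CK. cnj (e k c) * Phi c)" for k
    proof -
      have "(\<Sum>c\<in>?CK. cnj (e k c) * Phi c) = (\<Sum>x\<in>?CX. \<Sum>y\<in>?CY. cnj (e k (glue X x y)) * Phi (glue X x y))"
        by (rule sumK)
      also have "\<dots> = (\<Sum>x\<in>?CX. \<Sum>y\<in>?CY. cnj (e k (glue X x y)) * (u i x * w j y))"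
        by (intro sum.cong refl) (simp add: Pg)
      also have "\<dots> = cnj (t k i j)" unfolding t_def by (simp add: mult_ac)
      finally show ?thesis by simp
    qed
    have "(\<Sum>k<NK. t k i j * cnj (t k i j)) = (\<Sum>k<NK. cnj (t k i j) * cnj (cnj (t k i j)))"
      by (simp add: mult.commute)
    also have "\<dots> = (\<Sum>c\<in>?CK. Phi c * cnj (Phi c))" unfolding ct by (rule Pe)
    also have "\<dots> = (\<Sum>x\<in>?CX. \<Sum>y\<in>?CY. (u i x * w j y) * cnj (u i x * w j y))"
      unfolding sumK by (intro sum.cong refl) (simp add: Pg)
    also have "\<dots> = (\<Sum>x\<in>?CX. cnj (u i x) * u i x) * (\<Sum>y\<in>?CY. cnj (w j y) * w j y)"
      by (simp add: sum_product mult_ac)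
    also have "\<dots> = 1" using isspecD(1)[OF su i i] isspecD(1)[OF sw j j] by simp
    finally show ?thesis .
  qed
  have am: "complex_of_real (a i) = (\<Sum>j<NY. \<Sum>k<NK. complex_of_real (lam k) * (t k i j * cnj (t k i j)))"
    if i: "i < NX" for i
  proof -
    have SX: "\<forall>x\<in>?CX. \<forall>x'\<in>?CX. sX x x' = (\<Sum>y\<in>?CY. \<Sum>k<NK. complex_of_real (lam k) * e k (glue X x y) * cnj (e k (glue X x' y)))"
    proof (intro ballI)
      fix x x' assume x: "x \<in> ?CX" and x': "x' \<in> ?CX"
      have "sX x x' = (\<Sum>y\<in>?CY. sK (glue X x y) (glue X x' y))"
        unfolding sX_def sK_def using reduced_marg[OF fA XK KA', of d \<rho> x x'] KX by simp
      also have "\<dots> = (\<Sum>y\<in>?CY. \<Sum>k<NK. complex_of_real (lam k) * e k (glue X x y) * cnj (e k (glue X x' y)))"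
        by (intro sum.cong refl) (use isspecD(3)[OF se] gl x x' in auto)
      finally show "sX x x' = (\<Sum>y\<in>?CY. \<Sum>k<NK. complex_of_real (lam k) * e k (glue X x y) * cnj (e k (glue X x' y)))" .
    qed
    have "complex_of_real (a i) = quadform ?CX sX (u i)" using spec_quad[OF su fCX i] by simp
    also have "\<dots> = (\<Sum>k<NK. complex_of_real (lam k) * (\<Sum>y\<in>?CY. G1 k i y * cnj (G1 k i y)))"
      unfolding G1_def by (rule quad_marg[OF SX])
    also have "\<dots> = (\<Sum>k<NK. complex_of_real (lam k) * (\<Sum>j<NY. t k i j * cnj (t k i j)))"
      unfolding tG1 Pw ..
    also have "\<dots> = (\<Sum>k<NK. \<Sum>j<NY. complex_of_real (lam k) * (t k i j * cnj (t k i j)))"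
      by (simp add: sum_distrib_left)
    also have "\<dots> = (\<Sum>j<NY. \<Sum>k<NK. complex_of_real (lam k) * (t k i j * cnj (t k i j)))"
      by (rule sum.swap)
    finally show ?thesis .
  qed
  have bm: "complex_of_real (b j) = (\<Sum>i<NX. \<Sum>k<NK. complex_of_real (lam k) * (t k i j * cnj (t k i j)))"
    if j: "j < NY" for j
  proof -
    have SY: "\<forall>y\<in>?CY. \<forall>y'\<in>?CY. sY y y' = (\<Sum>x\<in>?CX. \<Sum>k<NK. complex_of_real (lam k) * e k (glue X x y) * cnj (e k (glue X x y')))"
    proof (intro ballI)
      fix y y' assume y: "y \<in> ?CY" and y': "y' \<in> ?CY"
      have "sY y y' = (\<Sum>x\<in>?CX. sK (glue Y y x) (glue Y y' x))"
        unfolding sY_def sK_def using reduced_marg[OF fA YK KA', of d \<rho> y y'] KY by simp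
      also have "\<dots> = (\<Sum>x\<in>?CX. sK (glue X x y) (glue X x y'))"
        by (intro sum.cong refl) (use glue_swap[OF _ y XY] glue_swap[OF _ y' XY] in simp)
      also have "\<dots> = (\<Sum>x\<in>?CX. \<Sum>k<NK. complex_of_real (lam k) * e k (glue X x y) * cnj (e k (glue X x y')))"
        by (intro sum.cong refl) (use isspecD(3)[OF se] gl y y' in auto)
      finally show "sY y y' = (\<Sum>x\<in>?CX. \<Sum>k<NK. complex_of_real (lam k) * e k (glue X x y) * cnj (e k (glue X x y')))" .
    qed
    have "complex_of_real (b j) = quadform ?CY sY (w j)" using spec_quad[OF sw fCY j] by simp
    also have "\<dots> = (\<Sum>k<NK. complex_of_real (lam k) * (\<Sum>x\<in>?CX. G2 k j x * cnj (G2 k j x)))"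
      unfolding G2_def by (rule quad_marg[where E = "\<lambda>k y x. e k (glue X x y)", OF SY])
    also have "\<dots> = (\<Sum>k<NK. complex_of_real (lam k) * (\<Sum>i<NX. t k i j * cnj (t k i j)))"
      unfolding tG2 Pu ..
    also have "\<dots> = (\<Sum>k<NK. \<Sum>i<NX. complex_of_real (lam k) * (t k i j * cnj (t k i j)))"
      by (simp add: sum_distrib_left)
    also have "\<dots> = (\<Sum>i<NX. \<Sum>k<NK. complex_of_real (lam k) * (t k i j * cnj (t k i j)))"
      by (rule sum.swap)
    finally show ?thesis .
  qed
  define D where "D k i j = (cmod (t k i j))\<^sup>2" for k i j
  have Dc: "t k i j * cnj (t k i j) = complex_of_real (D k i j)" for k i j
    unfolding D_def by (rule conj_sq_real)
  have main: "(\<Sum>k<NX. a k powr q) + (\<Sum>k<NY. b k powr q) \<le> 1 + (\<Sum>k<NK. lam k powr q)" if q: "q > 1" for q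
  proof (rule scalar_core[where D = D])
    show "finite {..<NX}" "finite {..<NY}" "finite {..<NK}" "q > 1" using q by auto
    show "\<forall>i\<in>{..<NX}. a i \<ge> 0" "\<forall>j\<in>{..<NY}. b j \<ge> 0" "\<forall>k\<in>{..<NK}. lam k \<ge> 0"
      using a0 b0 l0 by auto
    show "\<forall>k\<in>{..<NK}. \<forall>i\<in>{..<NX}. \<forall>j\<in>{..<NY}. D k i j \<ge> 0" unfolding D_def by simp
    show "(\<Sum>k\<in>{..<NK}. lam k) = 1" by (rule ls)
    show "\<forall>k\<in>{..<NK}. (\<Sum>i\<in>{..<NX}. \<Sum>j\<in>{..<NY}. D k i j) = 1"
    proof
      fix k assume "k \<in> {..<NK}"
      then have "complex_of_real (\<Sum>i<NX. \<Sum>j<NY. D k i j) = 1" using D1[of k] by (simp add: Dc)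
      then show "(\<Sum>i\<in>{..<NX}. \<Sum>j\<in>{..<NY}. D k i j) = 1" by (metis of_real_eq_1_iff)
    qed
    show "\<forall>i\<in>{..<NX}. \<forall>j\<in>{..<NY}. (\<Sum>k\<in>{..<NK}. D k i j) = 1"
    proof (intro ballI)
      fix i j assume "i \<in> {..<NX}" "j \<in> {..<NY}"
      then have "complex_of_real (\<Sum>k<NK. D k i j) = 1" using D2[of i j] by (simp add: Dc)
      then show "(\<Sum>k\<in>{..<NK}. D k i j) = 1" by (metis of_real_eq_1_iff)
    qed
    show "\<forall>i\<in>{..<NX}. a i = (\<Sum>j\<in>{..<NY}. \<Sum>k\<in>{..<NK}. lam k * D k i j)"
    proof
      fix i assume "i \<in> {..<NX}"
      then have "complex_of_real (a i) = complex_of_real (\<Sum>j\<in>{..<NY}. \<Sum>k\<in>{..<NK}. lam k * D k i j)"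
        using am[of i] by (simp add: Dc)
      then show "a i = (\<Sum>j\<in>{..<NY}. \<Sum>k\<in>{..<NK}. lam k * D k i j)" by (rule of_real_eq_iff[THEN iffD1])
    qed
    show "\<forall>j\<in>{..<NY}. b j = (\<Sum>i\<in>{..<NX}. \<Sum>k\<in>{..<NK}. lam k * D k i j)"
    proof
      fix j assume "j \<in> {..<NY}"
      then have "complex_of_real (b j) = complex_of_real (\<Sum>i\<in>{..<NX}. \<Sum>k\<in>{..<NK}. lam k * D k i j)"
        using bm[of j] by (simp add: Dc)
      then show "b j = (\<Sum>i\<in>{..<NX}. \<Sum>k\<in>{..<NK}. lam k * D k i j)" by (rule of_real_eq_iff[THEN iffD1])
    qed
  qed
  show ?thesis
    using ea eb el a0 as b0 bs l0 ls main unfolding sX_def sY_def sK_def K_def by blast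
qed

lemma subadd:
  assumes fA: "finite A" and dens: "density_op d A \<rho>" and XY: "X \<inter> Y = {}" and KA: "X \<union> Y \<subseteq> A"
    and q: "q \<ge> 1"
  shows "tsallis q d A \<rho> (X \<union> Y) \<le> tsallis q d A \<rho> X + tsallis q d A \<rho> Y"
proof -
  obtain NX a NY b NK lam where ea: "eigenvalues d X (reduced d A \<rho> X) = mset (map (\<lambda>k. complex_of_real (a k)) [0..<NX])"
    and eb: "eigenvalues d Y (reduced d A \<rho> Y) = mset (map (\<lambda>k. complex_of_real (b k)) [0..<NY])"
    and el: "eigenvalues d (X \<union> Y) (reduced d A \<rho> (X \<union> Y)) = mset (map (\<lambda>k. complex_of_real (lam k)) [0..<NK])"
    and a0: "\<forall>k<NX. a k \<ge> 0" and as: "(\<Sum>k<NX. a k) = 1"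
    and b0: "\<forall>k<NY. b k \<ge> 0" and bs: "(\<Sum>k<NY. b k) = 1"
    and l0: "\<forall>k<NK. lam k \<ge> 0" and ls: "(\<Sum>k<NK. lam k) = 1"
    and main: "\<forall>q>1. (\<Sum>k<NX. a k powr q) + (\<Sum>k<NY. b k powr q) \<le> 1 + (\<Sum>k<NK. lam k powr q)"
    using subadd_data[OF fA dens XY KA] by blast
  define fX where "fX r = ((\<Sum>k<NX. a k powr r) - 1) / (1 - r)" for r
  define fY where "fY r = ((\<Sum>k<NY. b k powr r) - 1) / (1 - r)" for r
  define fK where "fK r = ((\<Sum>k<NK. lam k powr r) - 1) / (1 - r)" for r
  have gt: "fK r \<le> fX r + fY r" if r: "r > 1" for r
  proof -
    have h: "(\<Sum>k<NX. a k powr r) + (\<Sum>k<NY. b k powr r) - 2 \<le> (\<Sum>k<NK. lam k powr r) - 1"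
      using main r by auto
    have "((\<Sum>k<NK. lam k powr r) - 1) / (1 - r) \<le> ((\<Sum>k<NX. a k powr r) + (\<Sum>k<NY. b k powr r) - 2) / (1 - r)"
      by (rule divide_right_mono_neg[OF h]) (use r in simp)
    also have "\<dots> = fX r + fY r" unfolding fX_def fY_def by (simp add: diff_divide_distrib add_divide_distrib)
    finally show ?thesis unfolding fK_def .
  qed
  show ?thesis
  proof (cases "q = 1")
    case False
    then have "q > 1" using q by simp
    then show ?thesis
      using gt[of q] False unfolding tsallis_spec[OF ea] tsallis_spec[OF eb] tsallis_spec[OF el] fX_def fY_def fK_def
      by simp
  next
    case True
    have LX: "(fX \<longlongrightarrow> (\<Sum>k<NX. - a k * ln (a k))) (at_right 1)"
      using tsallis_lim[OF a0 as] unfolding fX_def filterlim_at_split by blast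
    have LY: "(fY \<longlongrightarrow> (\<Sum>k<NY. - b k * ln (b k))) (at_right 1)"
      using tsallis_lim[OF b0 bs] unfolding fY_def filterlim_at_split by blast
    have LK: "(fK \<longlongrightarrow> (\<Sum>k<NK. - lam k * ln (lam k))) (at_right 1)"
      using tsallis_lim[OF l0 ls] unfolding fK_def filterlim_at_split by blast
    have LXY: "((\<lambda>r. fX r + fY r) \<longlongrightarrow> (\<Sum>k<NX. - a k * ln (a k)) + (\<Sum>k<NY. - b k * ln (b k))) (at_right 1)"
      by (rule tendsto_add[OF LX LY])
    have ev: "eventually (\<lambda>r. fK r \<le> fX r + fY r) (at_right (1::real))"
      using eventually_at_right_less[of "1::real"] by eventually_elim (rule gt)
    have "(\<Sum>k<NK. - lam k * ln (lam k)) \<le> (\<Sum>k<NX. - a k * ln (a k)) + (\<Sum>k<NY. - b k * ln (b k))"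
      by (rule tendsto_le[OF trivial_limit_at_right_real LXY LK ev])
    then show ?thesis
      using True unfolding tsallis_spec[OF ea] tsallis_spec[OF eb] tsallis_spec[OF el] by simp
  qed
qed

lemma chain:
  assumes fA: "finite A" and dens: "density_op d A \<rho>" and q: "q \<ge> 1" and fF: "finite F"
  shows "F \<inter> I = {} \<Longrightarrow> I \<union> F \<subseteq> A \<Longrightarrow>
    tsallis q d A \<rho> (I \<union> F) \<le> tsallis q d A \<rho> I + (\<Sum>v\<in>F. tsallis q d A \<rho> {v})"
  using fF
proof (induction F rule: finite_induct)
  case empty
  then show ?case by simp
next
  case (insert x F)
  have eq: "I \<union> insert x F = (I \<union> F) \<union> {x}" by auto
  have d: "(I \<union> F) \<inter> {x} = {}" using insert by auto
  have s: "(I \<union> F) \<union> {x} \<subseteq> A" using insert eq by auto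
  have "tsallis q d A \<rho> (I \<union> insert x F) \<le> tsallis q d A \<rho> (I \<union> F) + tsallis q d A \<rho> {x}"
    unfolding eq by (rule subadd[OF fA dens d s q])
  also have "tsallis q d A \<rho> (I \<union> F) \<le> tsallis q d A \<rho> I + (\<Sum>v\<in>F. tsallis q d A \<rho> {v})"
    using insert by auto
  finally show ?case using insert by (simp add: add.assoc)
qed

theorem lemma1:
  fixes A :: "'a set" and d :: "'a \<Rightarrow> nat" and \<rho> :: "'a op"
    and q :: real and I J :: "'a set"
  assumes "finite A"
    and "\<forall>v\<in>A. d v \<ge> 1"
    and "density_op d A \<rho>"
    and "q \<ge> 1"
    and "I \<noteq> {}" and "I \<subseteq> J" and "J \<subseteq> A"
  shows "total_corr q d A \<rho> I \<le> total_corr q d A \<rho> J"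
proof -
  have fJ: "finite J" using assms(1,7) finite_subset by auto
  have eqJ: "I \<union> (J - I) = J" using assms(6) by auto
  have c: "tsallis q d A \<rho> (I \<union> (J - I)) \<le> tsallis q d A \<rho> I + (\<Sum>v\<in>J - I. tsallis q d A \<rho> {v})"
    by (rule chain[OF assms(1) assms(3) assms(4)]) (use fJ assms(6,7) in auto)
  have s: "(\<Sum>v\<in>J. tsallis q d A \<rho> {v}) = (\<Sum>v\<in>J - I. tsallis q d A \<rho> {v}) + (\<Sum>v\<in>I. tsallis q d A \<rho> {v})"
    by (rule sum.subset_diff[OF assms(6) fJ])
  show ?thesis unfolding total_corr_def using c s eqJ by simp
qed

end
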